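(* Consider a main effect plan on $n$ runs with factors $F_1,\dots,F_m$ ($m\ge 2$), every level of every factor occurring, which is orthogonal through $F_m$, i.e. $N_{ij}=N_{im}R_m^{-1}N_{mj}$ for all distinct $i,j\in\{1,\dots,m-1\}$. Then: (a) for every $i\in\{1,\dots,m-1\}$, with $\bar i=\{1,\dots,m+1\}\setminus\{i\}$, one has $C_{i;\bar i}=R_i-N_{im}R_m^{-1}N_{im}'$ and $Q_{i;\bar i}=T_i-N_{im}R_m^{-1}T_m$, so the reduced normal equation $C_{i;\bar i}\widehat{\alpha^i}=Q_{i;\bar i}$ for $\alpha^i$ reads $(R_i-N_{im}R_m^{-1}N_{im}')\widehat{\alpha^i}=T_i-N_{im}R_m^{-1}T_m$; (b) the error sum of squares satisfies $$SS_E=SS_{tot}-\sum_{j=1}^{m-1}SS_{j;\{m,m+1\}}-SS_{m;\{m+1\}}.$$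
   Context: Model: $Y=\mathbf 1_n\mu+\sum_{i=1}^m X_i\alpha^i+\epsilon$ with uncorrelated homoscedastic errors, where $X_i$ is the $n\times a_i$ 0-1 design matrix of $F_i$ ($(u,t)$ entry $1$ iff $F_i$ is at level $t$ in run $u$); $X_{m+1}=\mathbf 1_n$. $N_{ij}=X_i'X_j$, $r_i=X_i'\mathbf 1_n$, $R_i=\mathrm{diag}(r_i)$, $T_i=X_i'Y$ (vector of level totals of $F_i$). $P_S$ is the orthogonal projector onto the column space of $[X_j]_{j\in S}$ for $S\subseteq\{1,\dots,m+1\}$. For $i\notin T$: $C_{i;T}=X_i'(I-P_T)X_i$, $Q_{i;T}=X_i'(I-P_T)Y$, $SS_{i;T}=Q_{i;T}'(C_{i;T})^-Q_{i;T}$. $SS_{tot}=\sum_uY_u^2-(\sum_uY_u)^2/n$ and $SS_E=Y'(I-P_{\{1,\dots,m+1\}})Y$. *)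

theory Defs
  imports "Jordan_Normal_Form.Matrix" "Jordan_Normal_Form.Gauss_Jordan_Elimination"
begin

text \<open>Factor i has a i levels
  0..a i - 1, and lev i u is the level of factor i in run u (u < n).
  Index m+1 stands for the general mean (column of ones).\<close>

definition ncols :: "nat \<Rightarrow> (nat \<Rightarrow> nat) \<Rightarrow> nat \<Rightarrow> nat" where
  "ncols m a i = (if i = Suc m then 1 else a i)"

definition Xd :: "nat \<Rightarrow> nat \<Rightarrow> (nat \<Rightarrow> nat) \<Rightarrow> (nat \<Rightarrow> nat \<Rightarrow> nat) \<Rightarrow> nat \<Rightarrow> real mat" where
  "Xd n m a lev i = (if i = Suc m then mat n 1 (\<lambda>_. 1)
      else mat n (a i) (\<lambda>(u,t). if lev i u = t then 1 else 0))"

definition Nmat :: "nat \<Rightarrow> nat \<Rightarrow> (nat \<Rightarrow> nat) \<Rightarrow> (nat \<Rightarrow> nat \<Rightarrow> nat) \<Rightarrow> nat \<Rightarrow> nat \<Rightarrow> real mat" where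
  "Nmat n m a lev i j = transpose_mat (Xd n m a lev i) * Xd n m a lev j"

definition rvec :: "nat \<Rightarrow> nat \<Rightarrow> (nat \<Rightarrow> nat) \<Rightarrow> (nat \<Rightarrow> nat \<Rightarrow> nat) \<Rightarrow> nat \<Rightarrow> real vec" where
  "rvec n m a lev i = transpose_mat (Xd n m a lev i) *\<^sub>v vec n (\<lambda>_. 1)"

definition Rmat :: "nat \<Rightarrow> nat \<Rightarrow> (nat \<Rightarrow> nat) \<Rightarrow> (nat \<Rightarrow> nat \<Rightarrow> nat) \<Rightarrow> nat \<Rightarrow> real mat" where
  "Rmat n m a lev i = mat_diag (ncols m a i) (\<lambda>t. rvec n m a lev i $ t)"

text \<open>R_i^{-1}: inverse of the diagonal matrix R_i (all level counts positive when every level occurs).\<close>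
definition Rinv :: "nat \<Rightarrow> nat \<Rightarrow> (nat \<Rightarrow> nat) \<Rightarrow> (nat \<Rightarrow> nat \<Rightarrow> nat) \<Rightarrow> nat \<Rightarrow> real mat" where
  "Rinv n m a lev i = mat_diag (ncols m a i) (\<lambda>t. 1 / (rvec n m a lev i $ t))"

definition Tvec :: "nat \<Rightarrow> nat \<Rightarrow> (nat \<Rightarrow> nat) \<Rightarrow> (nat \<Rightarrow> nat \<Rightarrow> nat) \<Rightarrow> real vec \<Rightarrow> nat \<Rightarrow> real vec" where
  "Tvec n m a lev Y i = transpose_mat (Xd n m a lev i) *\<^sub>v Y"

definition colspace :: "nat \<Rightarrow> nat \<Rightarrow> (nat \<Rightarrow> nat) \<Rightarrow> (nat \<Rightarrow> nat \<Rightarrow> nat) \<Rightarrow> nat set \<Rightarrow> real vec set" where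
  "colspace n m a lev S = {v. \<exists>c. (\<forall>j\<in>S. c j \<in> carrier_vec (ncols m a j)) \<and>
       v = vec n (\<lambda>u. \<Sum>j\<in>S. (Xd n m a lev j *\<^sub>v c j) $ u)}"

definition Proj :: "nat \<Rightarrow> nat \<Rightarrow> (nat \<Rightarrow> nat) \<Rightarrow> (nat \<Rightarrow> nat \<Rightarrow> nat) \<Rightarrow> nat set \<Rightarrow> real mat" where
  "Proj n m a lev S = (THE P. P \<in> carrier_mat n n \<and>
      (\<forall>v\<in>carrier_vec n. P *\<^sub>v v \<in> colspace n m a lev S \<and>
         (\<forall>w\<in>colspace n m a lev S. (v - P *\<^sub>v v) \<bullet> w = 0)))"

definition Cmat :: "nat \<Rightarrow> nat \<Rightarrow> (nat \<Rightarrow> nat) \<Rightarrow> (nat \<Rightarrow> nat \<Rightarrow> nat) \<Rightarrow> nat \<Rightarrow> nat set \<Rightarrow> real mat" where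
  "Cmat n m a lev i T = transpose_mat (Xd n m a lev i) * (1\<^sub>m n - Proj n m a lev T) * Xd n m a lev i"

definition Qvec :: "nat \<Rightarrow> nat \<Rightarrow> (nat \<Rightarrow> nat) \<Rightarrow> (nat \<Rightarrow> nat \<Rightarrow> nat) \<Rightarrow> real vec \<Rightarrow> nat \<Rightarrow> nat set \<Rightarrow> real vec" where
  "Qvec n m a lev Y i T = transpose_mat (Xd n m a lev i) *\<^sub>v ((1\<^sub>m n - Proj n m a lev T) *\<^sub>v Y)"

definition ginv :: "nat \<Rightarrow> real mat \<Rightarrow> real mat" where
  "ginv k C = (SOME G. G \<in> carrier_mat k k \<and> C * G * C = C)"

definition SSfac :: "nat \<Rightarrow> nat \<Rightarrow> (nat \<Rightarrow> nat) \<Rightarrow> (nat \<Rightarrow> nat \<Rightarrow> nat) \<Rightarrow> real vec \<Rightarrow> nat \<Rightarrow> nat set \<Rightarrow> real" where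
  "SSfac n m a lev Y i T = (let Q = Qvec n m a lev Y i T in
      Q \<bullet> (ginv (ncols m a i) (Cmat n m a lev i T) *\<^sub>v Q))"

definition SStot :: "nat \<Rightarrow> real vec \<Rightarrow> real" where
  "SStot n Y = (\<Sum>u<n. (Y $ u)^2) - (\<Sum>u<n. Y $ u)^2 / real n"

definition SSE :: "nat \<Rightarrow> nat \<Rightarrow> (nat \<Rightarrow> nat) \<Rightarrow> (nat \<Rightarrow> nat \<Rightarrow> nat) \<Rightarrow> real vec \<Rightarrow> real" where
  "SSE n m a lev Y = Y \<bullet> ((1\<^sub>m n - Proj n m a lev {1..Suc m}) *\<^sub>v Y)"

end

theory Submission
  imports Defs
begin


lemma dot_self_zero:
  fixes v :: "real vec"
  assumes v: "v \<in> carrier_vec n" and z: "v \<bullet> v = 0" shows "v = 0\<^sub>v n"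
proof -
  have "(\<Sum>i\<in>{0..<n}. v$i * v$i) = 0" using v z by (simp add: scalar_prod_def)
  hence "\<forall>i\<in>{0..<n}. v$i*v$i = 0" by (subst sum_nonneg_eq_0_iff[symmetric]) auto
  thus ?thesis using v by (intro eq_vecI) auto
qed

lemma minus_zero_eq:
  fixes u w :: "real vec"
  assumes u: "u \<in> carrier_vec k" and w: "w \<in> carrier_vec k" and z: "u - w = 0\<^sub>v k"
  shows "u = w"
proof (rule eq_vecI)
  fix i assume i: "i < dim_vec w"
  have "(u - w) $ i = 0" using z i w by simp
  thus "u $ i = w $ i" using i u w by simp
qed (use u w in auto)

lemma vec_eq_dot:
  fixes u w :: "real vec"
  assumes u: "u \<in> carrier_vec k" and w: "w \<in> carrier_vec k"
    and h: "\<And>c. c \<in> carrier_vec k \<Longrightarrow> u \<bullet> c = w \<bullet> c"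
  shows "u = w"
proof -
  have "(u - w) \<bullet> (u - w) = 0"
    using h[of "u - w"] u w by (simp add: minus_scalar_prod_distrib[of _ k])
  hence "u - w = 0\<^sub>v k" by (rule dot_self_zero[rotated]) (use u w in auto)
  thus ?thesis by (rule minus_zero_eq[OF u w])
qed

lemma vec_zero_dot:
  fixes u :: "real vec"
  assumes u: "u \<in> carrier_vec k"
    and h: "\<And>c. c \<in> carrier_vec k \<Longrightarrow> u \<bullet> c = 0"
  shows "u = 0\<^sub>v k"
  using vec_eq_dot[OF u zero_carrier_vec[of k]] h by simp

lemma mat_eq_mult:
  fixes A B :: "real mat"
  assumes A: "A \<in> carrier_mat r k" and B: "B \<in> carrier_mat r k"
    and h: "\<And>c. c \<in> carrier_vec k \<Longrightarrow> A *\<^sub>v c = B *\<^sub>v c"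
  shows "A = B"
proof (rule eq_matI)
  fix i j assume i: "i < dim_row B" and j: "j < dim_col B"
  have "(A *\<^sub>v unit_vec k j) $ i = (B *\<^sub>v unit_vec k j) $ i" using h[of "unit_vec k j"] by simp
  thus "A $$ (i,j) = B $$ (i,j)" using A B i j by simp
qed (use A B in auto)

lemma adj:
  fixes A :: "real mat"
  assumes "A \<in> carrier_mat nr nc" "x \<in> carrier_vec nc" "y \<in> carrier_vec nr"
  shows "y \<bullet> (A *\<^sub>v x) = (transpose_mat A *\<^sub>v y) \<bullet> x"
  using transpose_vec_mult_scalar[OF assms] by simp

definition isproj :: "nat \<Rightarrow> real mat \<Rightarrow> real vec set \<Rightarrow> bool" where
  "isproj n P W \<longleftrightarrow> P \<in> carrier_mat n n \<and>
     (\<forall>v\<in>carrier_vec n. P *\<^sub>v v \<in> W \<and> (\<forall>w\<in>W. (v - P *\<^sub>v v) \<bullet> w = 0))"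

definition subsp :: "nat \<Rightarrow> real vec set \<Rightarrow> bool" where
  "subsp n W \<longleftrightarrow> W \<subseteq> carrier_vec n \<and> (\<forall>x\<in>W. \<forall>y\<in>W. x - y \<in> W)"

lemma isprojD:
  assumes "isproj n P W"
  shows "P \<in> carrier_mat n n" "\<And>v. v \<in> carrier_vec n \<Longrightarrow> P *\<^sub>v v \<in> W"
    "\<And>v w. v \<in> carrier_vec n \<Longrightarrow> w \<in> W \<Longrightarrow> (v - P *\<^sub>v v) \<bullet> w = 0"
  using assms unfolding isproj_def by auto

lemma proj_fix:
  assumes P: "isproj n P W" and W: "subsp n W" and w: "w \<in> W"
  shows "P *\<^sub>v w = w"
proof -
  have Pc: "P \<in> carrier_mat n n" using isprojD(1)[OF P] by auto
  have wc: "w \<in> carrier_vec n" using W w unfolding subsp_def by auto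
  have Pw: "P *\<^sub>v w \<in> W" using isprojD(2)[OF P wc] .
  have d: "w - P *\<^sub>v w \<in> W" using W w Pw unfolding subsp_def by auto
  have "(w - P *\<^sub>v w) \<bullet> (w - P *\<^sub>v w) = 0" using isprojD(3)[OF P wc d] .
  hence z: "w - P *\<^sub>v w = 0\<^sub>v n" by (rule dot_self_zero[rotated]) (use wc Pc in auto)
  have "w = P *\<^sub>v w" by (rule minus_zero_eq[OF wc _ z]) (use wc Pc in auto)
  thus ?thesis by simp
qed

lemma proj_sym:
  assumes P: "isproj n P W" and W: "subsp n W" and u: "u \<in> carrier_vec n" and v: "v \<in> carrier_vec n"
  shows "(P *\<^sub>v v) \<bullet> u = v \<bullet> (P *\<^sub>v u)"
proof -
  have Pc: "P \<in> carrier_mat n n" using isprojD(1)[OF P] by auto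
  have Pu: "P *\<^sub>v u \<in> W" "P *\<^sub>v v \<in> W" using isprojD(2)[OF P] u v by auto
  have 1: "(u - P *\<^sub>v u) \<bullet> (P *\<^sub>v v) = 0" using isprojD(3)[OF P u Pu(2)] .
  have 2: "(v - P *\<^sub>v v) \<bullet> (P *\<^sub>v u) = 0" using isprojD(3)[OF P v Pu(1)] .
  have "(P *\<^sub>v v) \<bullet> u = u \<bullet> (P *\<^sub>v v)" by (rule comm_scalar_prod[of _ n]) (use Pc u v in auto)
  also have "\<dots> = (P *\<^sub>v u) \<bullet> (P *\<^sub>v v)" using 1 Pc u v by (simp add: minus_scalar_prod_distrib[of _ n])
  also have "\<dots> = (P *\<^sub>v v) \<bullet> (P *\<^sub>v u)" by (rule comm_scalar_prod[of _ n]) (use Pc u v in auto)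
  also have "\<dots> = v \<bullet> (P *\<^sub>v u)" using 2 Pc u v by (simp add: minus_scalar_prod_distrib[of _ n])
  finally show ?thesis .
qed

lemma proj_unique:
  assumes P: "isproj n P W" and P': "isproj n P' W" and W: "subsp n W"
  shows "P = P'"
proof (rule mat_eq_mult[of _ n n])
  show Pc: "P \<in> carrier_mat n n" and P'c: "P' \<in> carrier_mat n n" using isprojD(1)[OF P] isprojD(1)[OF P'] by auto
  fix v :: "real vec" assume v: "v \<in> carrier_vec n"
  have a: "P *\<^sub>v v \<in> W" "P' *\<^sub>v v \<in> W" using isprojD(2)[OF P v] isprojD(2)[OF P' v] by auto
  hence d: "P *\<^sub>v v - P' *\<^sub>v v \<in> W" using W unfolding subsp_def by auto
  have 1: "(v - P *\<^sub>v v) \<bullet> (P *\<^sub>v v - P' *\<^sub>v v) = 0" using isprojD(3)[OF P v d] .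
  have 2: "(v - P' *\<^sub>v v) \<bullet> (P *\<^sub>v v - P' *\<^sub>v v) = 0" using isprojD(3)[OF P' v d] .
  have e: "P *\<^sub>v v - P' *\<^sub>v v = (v - P' *\<^sub>v v) - (v - P *\<^sub>v v)"
    by (rule eq_vecI) (use Pc P'c v in simp_all)
  have "(P *\<^sub>v v - P' *\<^sub>v v) \<bullet> (P *\<^sub>v v - P' *\<^sub>v v) =
      (v - P' *\<^sub>v v) \<bullet> (P *\<^sub>v v - P' *\<^sub>v v) - (v - P *\<^sub>v v) \<bullet> (P *\<^sub>v v - P' *\<^sub>v v)"
    apply (subst (1) e) apply (rule minus_scalar_prod_distrib[of _ n]) using Pc P'c v by auto
  also have "\<dots> = 0" using 1 2 by simp
  finally have z: "P *\<^sub>v v - P' *\<^sub>v v = 0\<^sub>v n" by (rule dot_self_zero[rotated]) (use Pc P'c v in auto)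
  show "P *\<^sub>v v = P' *\<^sub>v v" by (rule minus_zero_eq[OF _ _ z]) (use Pc P'c v in auto)
qed


definition spanf :: "nat \<Rightarrow> 'k set \<Rightarrow> ('k \<Rightarrow> real vec) \<Rightarrow> real vec set" where
  "spanf n K g = {v. \<exists>c. v = vec n (\<lambda>u. \<Sum>k\<in>K. c k * g k $ u)}"

lemma spanf_carrier: "x \<in> spanf n K g \<Longrightarrow> x \<in> carrier_vec n"
  by (auto simp: spanf_def)

lemma spanf_minus:
  assumes "x \<in> spanf n K g" "y \<in> spanf n K g" shows "x - y \<in> spanf n K g"
proof -
  obtain c1 c2 where c: "x = vec n (\<lambda>u. \<Sum>k\<in>K. c1 k * g k $ u)" "y = vec n (\<lambda>u. \<Sum>k\<in>K. c2 k * g k $ u)"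
    using assms unfolding spanf_def by blast
  have "x - y = vec n (\<lambda>u. \<Sum>k\<in>K. (c1 k - c2 k) * g k $ u)"
    unfolding c by (rule eq_vecI) (simp_all add: sum_subtractf left_diff_distrib)
  thus ?thesis unfolding spanf_def mem_Collect_eq by (rule exI[of _ "\<lambda>k. c1 k - c2 k"])
qed

lemma spanf_add:
  assumes "x \<in> spanf n K g" "y \<in> spanf n K g" shows "x + y \<in> spanf n K g"
proof -
  obtain c1 c2 where c: "x = vec n (\<lambda>u. \<Sum>k\<in>K. c1 k * g k $ u)" "y = vec n (\<lambda>u. \<Sum>k\<in>K. c2 k * g k $ u)"
    using assms unfolding spanf_def by blast
  have "x + y = vec n (\<lambda>u. \<Sum>k\<in>K. (c1 k + c2 k) * g k $ u)"
    unfolding c by (rule eq_vecI) (simp_all add: sum.distrib distrib_right)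
  thus ?thesis unfolding spanf_def mem_Collect_eq by (rule exI[of _ "\<lambda>k. c1 k + c2 k"])
qed

lemma spanf_smult:
  assumes "x \<in> spanf n K g" shows "t \<cdot>\<^sub>v x \<in> spanf n K g"
proof -
  obtain c1 where c: "x = vec n (\<lambda>u. \<Sum>k\<in>K. c1 k * g k $ u)"
    using assms unfolding spanf_def by blast
  have "t \<cdot>\<^sub>v x = vec n (\<lambda>u. \<Sum>k\<in>K. (t * c1 k) * g k $ u)"
    unfolding c by (rule eq_vecI) (simp_all add: sum_distrib_left mult.assoc)
  thus ?thesis unfolding spanf_def mem_Collect_eq by (rule exI[of _ "\<lambda>k. t * c1 k"])
qed

lemma subsp_spanf: "subsp n (spanf n K g)"
  unfolding subsp_def using spanf_carrier spanf_minus by blast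

lemma spanf_insert:
  assumes K: "finite K" "k \<notin> K"
  shows "x \<in> spanf n (insert k K) g \<longleftrightarrow>
    (\<exists>t s. s \<in> spanf n K g \<and> x = t \<cdot>\<^sub>v vec n (\<lambda>u. g k $ u) + s)"
proof
  assume "x \<in> spanf n (insert k K) g"
  then obtain c where c: "x = vec n (\<lambda>u. \<Sum>k\<in>insert k K. c k * g k $ u)" unfolding spanf_def by blast
  have "x = c k \<cdot>\<^sub>v vec n (\<lambda>u. g k $ u) + vec n (\<lambda>u. \<Sum>k\<in>K. c k * g k $ u)"
    unfolding c by (rule eq_vecI) (simp_all add: K)
  moreover have "vec n (\<lambda>u. \<Sum>k\<in>K. c k * g k $ u) \<in> spanf n K g" unfolding spanf_def by blast
  ultimately show "\<exists>t s. s \<in> spanf n K g \<and> x = t \<cdot>\<^sub>v vec n (\<lambda>u. g k $ u) + s" by blast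
next
  assume "\<exists>t s. s \<in> spanf n K g \<and> x = t \<cdot>\<^sub>v vec n (\<lambda>u. g k $ u) + s"
  then obtain t s c where x: "x = t \<cdot>\<^sub>v vec n (\<lambda>u. g k $ u) + s"
    and s: "s = vec n (\<lambda>u. \<Sum>k\<in>K. c k * g k $ u)" unfolding spanf_def by blast
  have e: "(\<Sum>j\<in>K. (if j = k then t else c j) * g j $ u) = (\<Sum>j\<in>K. c j * g j $ u)" for u
    by (rule sum.cong) (use K in auto)
  have "x = vec n (\<lambda>u. \<Sum>j\<in>insert k K. (c(k := t)) j * g j $ u)"
    unfolding x s by (rule eq_vecI) (simp_all add: K e)
  thus "x \<in> spanf n (insert k K) g" unfolding spanf_def by blast
qed


lemma dot4:
  fixes a b c e :: "real vec"
  assumes "a \<in> carrier_vec n" "b \<in> carrier_vec n" "c \<in> carrier_vec n" "e \<in> carrier_vec n"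
  shows "(a - \<alpha> \<cdot>\<^sub>v b) \<bullet> (t \<cdot>\<^sub>v c + e) = t * (a \<bullet> c) + a \<bullet> e - \<alpha> * t * (b \<bullet> c) - \<alpha> * (b \<bullet> e)"
  using assms
  by (simp add: scalar_prod_def sum_distrib_left sum.distrib sum_subtractf algebra_simps)

lemma dot_minus_l:
  fixes a b c :: "real vec"
  assumes "a \<in> carrier_vec n" "b \<in> carrier_vec n" "c \<in> carrier_vec n"
  shows "(a - b) \<bullet> c = a \<bullet> c - b \<bullet> c"
  using assms by (simp add: scalar_prod_def sum_subtractf algebra_simps)

lemma dot_minus_r:
  fixes a b c :: "real vec"
  assumes "a \<in> carrier_vec n" "b \<in> carrier_vec n" "c \<in> carrier_vec n"
  shows "c \<bullet> (a - b) = c \<bullet> a - c \<bullet> b"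
  using assms by (simp add: scalar_prod_def sum_subtractf algebra_simps)

lemma dot_comm:
  fixes a b :: "real vec"
  assumes "a \<in> carrier_vec n" "b \<in> carrier_vec n"
  shows "a \<bullet> b = b \<bullet> a"
  using assms by (simp add: scalar_prod_def mult.commute)

lemma outer_mult:
  fixes P0 :: "real mat" and y v :: "real vec"
  assumes P0: "P0 \<in> carrier_mat n n" and y: "y \<in> carrier_vec n" and v: "v \<in> carrier_vec n"
  shows "mat n n (\<lambda>(i,j). P0 $$ (i,j) + y$i * y$j / q) *\<^sub>v v = P0 *\<^sub>v v + ((y \<bullet> v) / q) \<cdot>\<^sub>v y"
proof (rule eq_vecI)
  fix i assume "i < dim_vec (P0 *\<^sub>v v + ((y \<bullet> v) / q) \<cdot>\<^sub>v y)"
  hence i: "i < n" using P0 y by simp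
  have "(mat n n (\<lambda>(i,j). P0 $$ (i,j) + y$i * y$j / q) *\<^sub>v v) $ i
      = (\<Sum>j\<in>{0..<n}. (P0$$(i,j) + y$i*y$j/q) * v$j)"
    using i v by (simp add: scalar_prod_def)
  also have "\<dots> = (\<Sum>j\<in>{0..<n}. P0$$(i,j) * v$j) + y$i/q * (\<Sum>j\<in>{0..<n}. y$j * v$j)"
    by (simp add: distrib_right sum.distrib sum_distrib_left mult.assoc)
  also have "\<dots> = (P0 *\<^sub>v v + ((y \<bullet> v) / q) \<cdot>\<^sub>v y) $ i" using i P0 v y
    by (simp add: scalar_prod_def)
  finally show "(mat n n (\<lambda>(i,j). P0 $$ (i,j) + y$i * y$j / q) *\<^sub>v v) $ i = (P0 *\<^sub>v v + ((y \<bullet> v) / q) \<cdot>\<^sub>v y) $ i" .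
qed (use P0 y in auto)

lemma proj_exists_spanf:
  assumes "finite K" shows "\<exists>P. isproj n P (spanf n K g)"
  using assms
proof (induction K rule: finite_induct)
  case empty
  have sp: "spanf n {} g = {0\<^sub>v n}" by (auto simp: spanf_def zero_vec_def)
  have "isproj n (0\<^sub>m n n) (spanf n {} g)" unfolding isproj_def sp by (auto simp: scalar_prod_def)
  thus ?case by blast
next
  case (insert k K)
  obtain P0 where P0: "isproj n P0 (spanf n K g)" using insert.IH by blast
  define W0 where "W0 = spanf n K g"
  have P0W: "isproj n P0 W0" using P0 W0_def by simp
  have W0: "subsp n W0" unfolding W0_def by (rule subsp_spanf)
  have W0c: "\<And>s. s \<in> W0 \<Longrightarrow> s \<in> carrier_vec n" using W0 unfolding subsp_def by auto
  define x where "x = vec n (\<lambda>u. g k $ u)"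
  have P0c: "P0 \<in> carrier_mat n n" using isprojD(1)[OF P0] .
  have xc: "x \<in> carrier_vec n" unfolding x_def by simp
  define y where "y = x - P0 *\<^sub>v x"
  have yc: "y \<in> carrier_vec n" unfolding y_def using xc P0c by simp
  have P0x: "P0 *\<^sub>v x \<in> W0" using isprojD(2)[OF P0W xc] .
  have yW: "\<And>s. s \<in> W0 \<Longrightarrow> y \<bullet> s = 0" unfolding y_def using isprojD(3)[OF P0W xc] by blast
  have ins: "\<And>w. w \<in> spanf n (insert k K) g \<longleftrightarrow> (\<exists>t s. s\<in>W0 \<and> w = t \<cdot>\<^sub>v x + s)"
    unfolding W0_def x_def by (rule spanf_insert[OF insert(1,2)])
  show ?case
  proof (cases "y = 0\<^sub>v n")
    case True
    have z: "x - P0 *\<^sub>v x = 0\<^sub>v n" using True y_def by simp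
    have xeq: "x = P0 *\<^sub>v x" by (rule minus_zero_eq[OF xc _ z]) (use P0c xc in simp)
    have "isproj n P0 (spanf n (insert k K) g)"
      unfolding isproj_def
    proof (intro conjI ballI)
      show "P0 \<in> carrier_mat n n" by (rule P0c)
    next
      fix v :: "real vec" assume v: "v \<in> carrier_vec n"
      have "P0 *\<^sub>v v = 0 \<cdot>\<^sub>v x + P0 *\<^sub>v v" by (rule eq_vecI) (use P0c v xc in auto)
      thus "P0 *\<^sub>v v \<in> spanf n (insert k K) g" using ins isprojD(2)[OF P0W v] by blast
    next
      fix v w :: "real vec" assume v: "v \<in> carrier_vec n" and w: "w \<in> spanf n (insert k K) g"
      then obtain t s where s: "s \<in> W0" and w: "w = t \<cdot>\<^sub>v x + s" using ins by blast
      have sc: "s \<in> carrier_vec n" using W0c s by blast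
      have vc: "v - P0 *\<^sub>v v \<in> carrier_vec n" using v P0c by simp
      have "(v - P0 *\<^sub>v v) \<bullet> w = ((v - P0 *\<^sub>v v) - 0 \<cdot>\<^sub>v x) \<bullet> (t \<cdot>\<^sub>v x + s)"
        unfolding w by (rule arg_cong[where f="\<lambda>z. z \<bullet> _"]) (rule eq_vecI, use vc xc P0c in auto)
      also have "\<dots> = t * ((v - P0 *\<^sub>v v) \<bullet> x) + (v - P0 *\<^sub>v v) \<bullet> s"
        using dot4[OF vc xc xc sc, of 0 t] by simp
      also have "(v - P0 *\<^sub>v v) \<bullet> x = 0" using isprojD(3)[OF P0W v P0x] xeq by simp
      also have "(v - P0 *\<^sub>v v) \<bullet> s = 0" using isprojD(3)[OF P0W v s] .
      finally show "(v - P0 *\<^sub>v v) \<bullet> w = 0" by simp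
    qed
    thus ?thesis by blast
  next
    case False
    define q where "q = y \<bullet> y"
    have q: "q \<noteq> 0" using dot_self_zero[OF yc] False q_def by auto
    define P where "P = mat n n (\<lambda>(i,j). P0 $$ (i,j) + y$i * y$j / q)"
    have Pc: "P \<in> carrier_mat n n" unfolding P_def by simp
    have Pv: "\<And>v. v \<in> carrier_vec n \<Longrightarrow> P *\<^sub>v v = P0 *\<^sub>v v + ((y \<bullet> v) / q) \<cdot>\<^sub>v y"
      unfolding P_def by (rule outer_mult[OF P0c yc])
    have "isproj n P (spanf n (insert k K) g)"
      unfolding isproj_def
    proof (intro conjI ballI)
      show "P \<in> carrier_mat n n" by (rule Pc)
    next
      fix v :: "real vec" assume v: "v \<in> carrier_vec n"
      define \<alpha> where "\<alpha> = (y \<bullet> v) / q"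
      have "P *\<^sub>v v = \<alpha> \<cdot>\<^sub>v x + (P0 *\<^sub>v v - \<alpha> \<cdot>\<^sub>v (P0 *\<^sub>v x))"
      proof (rule eq_vecI)
        fix i assume "i < dim_vec (\<alpha> \<cdot>\<^sub>v x + (P0 *\<^sub>v v - \<alpha> \<cdot>\<^sub>v (P0 *\<^sub>v x)))"
        hence i: "i < n" using xc P0c by simp
        have yi: "y $ i = x $ i - (P0 *\<^sub>v x) $ i" unfolding y_def using i xc P0c by simp
        show "(P *\<^sub>v v) $ i = (\<alpha> \<cdot>\<^sub>v x + (P0 *\<^sub>v v - \<alpha> \<cdot>\<^sub>v (P0 *\<^sub>v x))) $ i"
          unfolding Pv[OF v] \<alpha>_def[symmetric] using i yc xc P0c v
          by (simp add: yi algebra_simps del: index_mult_mat_vec)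
      qed (use Pc xc P0c in auto)
      moreover have "P0 *\<^sub>v v - \<alpha> \<cdot>\<^sub>v (P0 *\<^sub>v x) \<in> W0"
        unfolding W0_def by (intro spanf_minus spanf_smult) (use isprojD(2)[OF P0W v] P0x W0_def in auto)
      ultimately show "P *\<^sub>v v \<in> spanf n (insert k K) g" using ins by blast
    next
      fix v w :: "real vec" assume v: "v \<in> carrier_vec n" and w: "w \<in> spanf n (insert k K) g"
      then obtain t s where s: "s \<in> W0" and w: "w = t \<cdot>\<^sub>v x + s" using ins by blast
      define \<alpha> where "\<alpha> = (y \<bullet> v) / q"
      define s' where "s' = t \<cdot>\<^sub>v (P0 *\<^sub>v x) + s"
      have s': "s' \<in> W0" unfolding s'_def W0_def
        by (intro spanf_add spanf_smult) (use s P0x W0_def in auto)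
      have sc: "s \<in> carrier_vec n" "s' \<in> carrier_vec n" using W0c s s' by auto
      have vc: "v - P0 *\<^sub>v v \<in> carrier_vec n" using v P0c by simp
      have d: "v - P *\<^sub>v v = (v - P0 *\<^sub>v v) - \<alpha> \<cdot>\<^sub>v y"
        unfolding Pv[OF v] \<alpha>_def[symmetric]
        by (rule eq_vecI) (use P0c v yc in auto)
      have w': "w = t \<cdot>\<^sub>v y + s'"
        unfolding w s'_def y_def
        by (rule eq_vecI) (use P0c sc xc in \<open>auto simp: algebra_simps\<close>)
      have "(v - P *\<^sub>v v) \<bullet> w = t * ((v - P0 *\<^sub>v v) \<bullet> y) + (v - P0 *\<^sub>v v) \<bullet> s'
          - \<alpha> * t * (y \<bullet> y) - \<alpha> * (y \<bullet> s')"
        unfolding d w' by (rule dot4[OF vc yc yc sc(2)])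
      also have "(v - P0 *\<^sub>v v) \<bullet> s' = 0" using isprojD(3)[OF P0W v s'] .
      also have "y \<bullet> s' = 0" using yW[OF s'] .
      also have "(v - P0 *\<^sub>v v) \<bullet> y = v \<bullet> y - (P0 *\<^sub>v v) \<bullet> y"
        by (rule dot_minus_l[of _ n]) (use v P0c yc in auto)
      also have "(P0 *\<^sub>v v) \<bullet> y = 0"
        using yW[OF isprojD(2)[OF P0W v]] dot_comm[OF yc, of "P0 *\<^sub>v v"] P0c v by simp
      also have "v \<bullet> y = y \<bullet> v" by (rule dot_comm[OF v yc])
      finally show "(v - P *\<^sub>v v) \<bullet> w = 0" using q unfolding \<alpha>_def q_def[symmetric] by simp
    qed
    thus ?thesis by blast
  qed
qed


definition cs :: "real mat \<Rightarrow> real vec set" where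
  "cs A = {A *\<^sub>v c | c. c \<in> carrier_vec (dim_col A)}"

lemma cs_spanf:
  assumes A: "A \<in> carrier_mat n k"
  shows "cs A = spanf n {0..<k} (\<lambda>t. col A t)"
proof
  show "cs A \<subseteq> spanf n {0..<k} (\<lambda>t. col A t)"
  proof
    fix x assume "x \<in> cs A"
    then obtain c where c: "c \<in> carrier_vec k" and x: "x = A *\<^sub>v c" using A unfolding cs_def by auto
    have "x = vec n (\<lambda>u. \<Sum>t\<in>{0..<k}. c $ t * col A t $ u)"
      unfolding x by (rule eq_vecI) (use A c in \<open>auto simp: scalar_prod_def mult.commute intro!: sum.cong\<close>)
    thus "x \<in> spanf n {0..<k} (\<lambda>t. col A t)" unfolding spanf_def mem_Collect_eq
      by (rule exI[of _ "\<lambda>t. c $ t"])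
  qed
next
  show "spanf n {0..<k} (\<lambda>t. col A t) \<subseteq> cs A"
  proof
    fix x assume "x \<in> spanf n {0..<k} (\<lambda>t. col A t)"
    then obtain c where x: "x = vec n (\<lambda>u. \<Sum>t\<in>{0..<k}. c t * col A t $ u)" unfolding spanf_def by blast
    have "x = A *\<^sub>v vec k c"
      unfolding x by (rule eq_vecI) (use A in \<open>auto simp: scalar_prod_def mult.commute intro!: sum.cong\<close>)
    thus "x \<in> cs A" unfolding cs_def using A by auto
  qed
qed

lemma subsp_cs: "A \<in> carrier_mat n k \<Longrightarrow> subsp n (cs A)"
  using cs_spanf subsp_spanf by metis

lemma proj_exists_cs: "A \<in> carrier_mat n k \<Longrightarrow> \<exists>P. isproj n P (cs A)"
  using cs_spanf proj_exists_spanf[of "{0..<k}"] by (metis finite_atLeastLessThan)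

lemma cs_mem: "A \<in> carrier_mat n k \<Longrightarrow> c \<in> carrier_vec k \<Longrightarrow> A *\<^sub>v c \<in> cs A"
  unfolding cs_def by auto

lemma ginv_exists:
  fixes C :: "real mat"
  assumes C: "C \<in> carrier_mat k k"
  shows "\<exists>G. G \<in> carrier_mat k k \<and> C * G * C = C"
proof -
  obtain P where P: "isproj k P (cs C)" using proj_exists_cs[OF C] by blast
  have Pc: "P \<in> carrier_mat k k" using isprojD(1)[OF P] .
  have "\<forall>t. \<exists>b. t < k \<longrightarrow> b \<in> carrier_vec k \<and> P *\<^sub>v unit_vec k t = C *\<^sub>v b"
  proof (intro allI)
    fix t
    have "P *\<^sub>v unit_vec k t \<in> cs C" using isprojD(2)[OF P] by simp
    then obtain b where "b \<in> carrier_vec k" "P *\<^sub>v unit_vec k t = C *\<^sub>v b" using C unfolding cs_def by auto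
    thus "\<exists>b. t < k \<longrightarrow> b \<in> carrier_vec k \<and> P *\<^sub>v unit_vec k t = C *\<^sub>v b" by blast
  qed
  then obtain b where b: "\<And>t. t < k \<Longrightarrow> b t \<in> carrier_vec k \<and> P *\<^sub>v unit_vec k t = C *\<^sub>v b t"
    by metis
  define G where "G = mat k k (\<lambda>(i,t). b t $ i)"
  have Gc: "G \<in> carrier_mat k k" unfolding G_def by simp
  have colG: "col G t = b t" if t: "t < k" for t
  proof -
    have bt: "b t \<in> carrier_vec k" using b[OF t] by simp
    show ?thesis unfolding G_def by (rule eq_vecI) (use bt t in auto)
  qed
  have CG: "C * G = P"
  proof (rule eq_matI)
    fix i t assume i: "i < dim_row P" and t: "t < dim_col P"
    hence i': "i < k" and t': "t < k" using Pc by auto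
    have "(C * G) $$ (i,t) = row C i \<bullet> b t" using C Gc i' t' colG[OF t'] by simp
    also have "\<dots> = (C *\<^sub>v b t) $ i" using C i' by simp
    also have "\<dots> = (P *\<^sub>v unit_vec k t) $ i" using b[OF t'] by simp
    also have "\<dots> = P $$ (i,t)" using Pc i' t' by simp
    finally show "(C * G) $$ (i,t) = P $$ (i,t)" .
  qed (use C Gc Pc in auto)
  have PC: "P * C = C"
  proof (rule eq_matI)
    fix i j assume i: "i < dim_row C" and j: "j < dim_col C"
    hence i': "i < k" and j': "j < k" using C by auto
    have cc: "col C j = C *\<^sub>v unit_vec k j"
      by (rule eq_vecI) (use C j' in auto)
    have "col C j \<in> cs C" unfolding cc by (rule cs_mem[OF C]) simp
    hence fx: "P *\<^sub>v col C j = col C j" using proj_fix[OF P subsp_cs[OF C]] by blast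
    have "(P * C) $$ (i,j) = (P *\<^sub>v col C j) $ i" using Pc C i' j' by simp
    also have "\<dots> = C $$ (i,j)" unfolding fx using C i' j' by simp
    finally show "(P * C) $$ (i,j) = C $$ (i,j)" .
  qed (use C Pc in auto)
  have "C * G * C = C" using CG PC by simp
  thus ?thesis using Gc by blast
qed

lemma ginv_prop:
  assumes C: "C \<in> carrier_mat k k"
  shows "ginv k C \<in> carrier_mat k k" "C * ginv k C * C = C"
proof -
  have "ginv k C \<in> carrier_mat k k \<and> C * ginv k C * C = C"
    unfolding ginv_def by (rule someI_ex[OF ginv_exists[OF C]])
  thus "ginv k C \<in> carrier_mat k k" "C * ginv k C * C = C" by auto
qed


lemma IP_apply:
  fixes P :: "real mat"
  assumes "P \<in> carrier_mat n n" "v \<in> carrier_vec n"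
  shows "(1\<^sub>m n - P) *\<^sub>v v = v - P *\<^sub>v v"
  using assms by (simp add: minus_mult_distrib_mat_vec[of _ n n])

lemma IP_sym:
  assumes P: "isproj n P W" and W: "subsp n W" and u: "u \<in> carrier_vec n" and v: "v \<in> carrier_vec n"
  shows "((1\<^sub>m n - P) *\<^sub>v u) \<bullet> v = u \<bullet> ((1\<^sub>m n - P) *\<^sub>v v)"
proof -
  have Pc: "P \<in> carrier_mat n n" using isprojD(1)[OF P] .
  have "((1\<^sub>m n - P) *\<^sub>v u) \<bullet> v = u \<bullet> v - (P *\<^sub>v u) \<bullet> v"
    unfolding IP_apply[OF Pc u] by (rule dot_minus_l[of _ n]) (use Pc u v in auto)
  also have "(P *\<^sub>v u) \<bullet> v = u \<bullet> (P *\<^sub>v v)" by (rule proj_sym[OF P W v u])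
  also have "u \<bullet> v - u \<bullet> (P *\<^sub>v v) = u \<bullet> ((1\<^sub>m n - P) *\<^sub>v v)"
    unfolding IP_apply[OF Pc v] by (rule dot_minus_r[symmetric, of _ n]) (use Pc u v in auto)
  finally show ?thesis .
qed

lemma IP_idem:
  assumes P: "isproj n P W" and W: "subsp n W" and v: "v \<in> carrier_vec n"
  shows "(1\<^sub>m n - P) *\<^sub>v ((1\<^sub>m n - P) *\<^sub>v v) = (1\<^sub>m n - P) *\<^sub>v v"
proof -
  have Pc: "P \<in> carrier_mat n n" using isprojD(1)[OF P] .
  have PP: "P *\<^sub>v (P *\<^sub>v v) = P *\<^sub>v v" by (rule proj_fix[OF P W isprojD(2)[OF P v]])
  have "P *\<^sub>v (v - P *\<^sub>v v) = P *\<^sub>v v - P *\<^sub>v (P *\<^sub>v v)"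
    by (rule mult_minus_distrib_mat_vec[OF Pc]) (use Pc v in auto)
  hence z: "P *\<^sub>v (v - P *\<^sub>v v) = 0\<^sub>v n" unfolding PP using Pc v by auto
  show ?thesis unfolding IP_apply[OF Pc v] using IP_apply[OF Pc, of "v - P *\<^sub>v v"] z Pc v by auto
qed

lemma sym_mat:
  fixes B :: "real mat"
  assumes B: "B \<in> carrier_mat n n"
    and Bsym: "\<And>u v. u \<in> carrier_vec n \<Longrightarrow> v \<in> carrier_vec n \<Longrightarrow> (B *\<^sub>v u) \<bullet> v = u \<bullet> (B *\<^sub>v v)"
  shows "transpose_mat B = B"
proof (rule mat_eq_mult[of _ n n])
  show "transpose_mat B \<in> carrier_mat n n" "B \<in> carrier_mat n n" using B by auto
  fix u :: "real vec" assume u: "u \<in> carrier_vec n"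
  show "transpose_mat B *\<^sub>v u = B *\<^sub>v u"
  proof (rule vec_eq_dot[of _ n])
    fix c :: "real vec" assume c: "c \<in> carrier_vec n"
    have "(transpose_mat B *\<^sub>v u) \<bullet> c = u \<bullet> (B *\<^sub>v c)" by (rule transpose_vec_mult_scalar[OF B c u])
    also have "\<dots> = (B *\<^sub>v u) \<bullet> c" using Bsym[OF u c] by simp
    finally show "(transpose_mat B *\<^sub>v u) \<bullet> c = (B *\<^sub>v u) \<bullet> c" .
  qed (use B u in auto)
qed

lemma ss_lemma:
  fixes B X Pi :: "real mat" and Y :: "real vec"
  assumes B: "B \<in> carrier_mat n n" and X: "X \<in> carrier_mat n k" and Y: "Y \<in> carrier_vec n"
    and Bsym: "\<And>u v. u \<in> carrier_vec n \<Longrightarrow> v \<in> carrier_vec n \<Longrightarrow> (B *\<^sub>v u) \<bullet> v = u \<bullet> (B *\<^sub>v v)"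
    and Bid: "\<And>v. v \<in> carrier_vec n \<Longrightarrow> B *\<^sub>v (B *\<^sub>v v) = B *\<^sub>v v"
    and Pi: "isproj n Pi (cs (B * X))"
  shows "(transpose_mat X *\<^sub>v (B *\<^sub>v Y)) \<bullet> (ginv k (transpose_mat X * B * X) *\<^sub>v (transpose_mat X *\<^sub>v (B *\<^sub>v Y)))
    = Y \<bullet> (Pi *\<^sub>v Y)"
proof -
  define A where "A = B * X"
  have Ac: "A \<in> carrier_mat n k" unfolding A_def using B X by simp
  define C where "C = transpose_mat X * B * X"
  have Cc: "C \<in> carrier_mat k k" unfolding C_def using B X by simp
  define G where "G = ginv k C"
  have Gc: "G \<in> carrier_mat k k" and CGC: "C * G * C = C" unfolding G_def using ginv_prop[OF Cc] by auto
  have Pic: "Pi \<in> carrier_mat n n" using isprojD(1)[OF Pi] .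
  have "Pi *\<^sub>v Y \<in> cs A" using isprojD(2)[OF Pi Y] unfolding A_def .
  then obtain b where b: "b \<in> carrier_vec k" and PiY: "Pi *\<^sub>v Y = A *\<^sub>v b" using Ac unfolding cs_def by auto
  have Acv: "\<And>c. c \<in> carrier_vec k \<Longrightarrow> A *\<^sub>v c = B *\<^sub>v (X *\<^sub>v c)" unfolding A_def using B X by simp
  have orth: "(Y - Pi *\<^sub>v Y) \<bullet> (B *\<^sub>v (X *\<^sub>v c)) = 0" if c: "c \<in> carrier_vec k" for c
  proof -
    have "A *\<^sub>v c \<in> cs A" by (rule cs_mem[OF Ac c])
    thus ?thesis using isprojD(3)[OF Pi Y] Acv[OF c] unfolding A_def by auto
  qed
  define Q where "Q = transpose_mat X *\<^sub>v (B *\<^sub>v Y)"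
  have Qc: "Q \<in> carrier_vec k" unfolding Q_def using X B Y by simp
  have Xb: "X *\<^sub>v b \<in> carrier_vec n" using X b by simp
  have BXb: "B *\<^sub>v (X *\<^sub>v b) \<in> carrier_vec n" using B Xb by simp
  have Cb: "C *\<^sub>v b = transpose_mat X *\<^sub>v (B *\<^sub>v (X *\<^sub>v b))"
  proof -
    have 1: "(transpose_mat X * B * X) *\<^sub>v b = (transpose_mat X * B) *\<^sub>v (X *\<^sub>v b)"
      by (rule assoc_mult_mat_vec[of _ k n]) (use B X b in auto)
    have 2: "(transpose_mat X * B) *\<^sub>v (X *\<^sub>v b) = transpose_mat X *\<^sub>v (B *\<^sub>v (X *\<^sub>v b))"
      by (rule assoc_mult_mat_vec[of _ k n]) (use B X b in auto)
    show ?thesis unfolding C_def 1 2 ..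
  qed
  have Qeq: "Q = C *\<^sub>v b"
  proof (rule vec_eq_dot[OF Qc])
    show "C *\<^sub>v b \<in> carrier_vec k" using Cc b by simp
    fix c :: "real vec" assume c: "c \<in> carrier_vec k"
    have Xc: "X *\<^sub>v c \<in> carrier_vec n" using X c by simp
    have "Q \<bullet> c = (B *\<^sub>v Y) \<bullet> (X *\<^sub>v c)" unfolding Q_def
      by (rule transpose_vec_mult_scalar[OF X c]) (use B Y in simp)
    also have "\<dots> = Y \<bullet> (B *\<^sub>v (X *\<^sub>v c))" by (rule Bsym[OF Y Xc])
    finally have 1: "Q \<bullet> c = Y \<bullet> (B *\<^sub>v (X *\<^sub>v c))" .
    have "(C *\<^sub>v b) \<bullet> c = (B *\<^sub>v (X *\<^sub>v b)) \<bullet> (X *\<^sub>v c)" unfolding Cb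
      by (rule transpose_vec_mult_scalar[OF X c BXb])
    also have "\<dots> = (B *\<^sub>v (B *\<^sub>v (X *\<^sub>v b))) \<bullet> (X *\<^sub>v c)" using Bid[OF Xb] by simp
    also have "\<dots> = (B *\<^sub>v (X *\<^sub>v b)) \<bullet> (B *\<^sub>v (X *\<^sub>v c))" by (rule Bsym[OF BXb Xc])
    also have "\<dots> = (Pi *\<^sub>v Y) \<bullet> (B *\<^sub>v (X *\<^sub>v c))" using PiY Acv[OF b] by simp
    finally have 2: "(C *\<^sub>v b) \<bullet> c = (Pi *\<^sub>v Y) \<bullet> (B *\<^sub>v (X *\<^sub>v c))" .
    have "(Y - Pi *\<^sub>v Y) \<bullet> (B *\<^sub>v (X *\<^sub>v c)) = Y \<bullet> (B *\<^sub>v (X *\<^sub>v c)) - (Pi *\<^sub>v Y) \<bullet> (B *\<^sub>v (X *\<^sub>v c))"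
      by (rule dot_minus_l[of _ n]) (use Y Pic B Xc in auto)
    thus "Q \<bullet> c = (C *\<^sub>v b) \<bullet> c" using 1 2 orth[OF c] by simp
  qed
  have Bt: "transpose_mat B = B" by (rule sym_mat[OF B Bsym])
  have Ct: "transpose_mat C = C"
  proof -
    have t1: "transpose_mat (transpose_mat X * B * X) = transpose_mat X * transpose_mat (transpose_mat X * B)"
      by (rule transpose_mult[of _ k n]) (use B X in auto)
    have t2: "transpose_mat (transpose_mat X * B) = transpose_mat B * transpose_mat (transpose_mat X)"
      by (rule transpose_mult[of _ k n]) (use B X in auto)
    have a: "transpose_mat X * B * X = transpose_mat X * (B * X)"
      by (rule assoc_mult_mat[of _ k n _ n _ k]) (use B X in auto)
    have "transpose_mat C = transpose_mat X * (B * X)" unfolding C_def t1 t2 Bt by simp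
    thus ?thesis unfolding C_def a .
  qed
  have GCb: "G *\<^sub>v (C *\<^sub>v b) \<in> carrier_vec k" using Gc Cc b by simp
  have "Q \<bullet> (G *\<^sub>v Q) = (C *\<^sub>v b) \<bullet> (G *\<^sub>v (C *\<^sub>v b))" unfolding Qeq ..
  also have "\<dots> = b \<bullet> (C *\<^sub>v (G *\<^sub>v (C *\<^sub>v b)))"
    using transpose_vec_mult_scalar[OF Cc GCb b] Ct by simp
  also have "C *\<^sub>v (G *\<^sub>v (C *\<^sub>v b)) = (C * G * C) *\<^sub>v b"
  proof -
    have 1: "(C * G * C) *\<^sub>v b = (C * G) *\<^sub>v (C *\<^sub>v b)"
      by (rule assoc_mult_mat_vec[of _ k k]) (use Cc Gc b in auto)
    have 2: "(C * G) *\<^sub>v (C *\<^sub>v b) = C *\<^sub>v (G *\<^sub>v (C *\<^sub>v b))"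
      by (rule assoc_mult_mat_vec[of _ k k]) (use Cc Gc b in auto)
    show ?thesis unfolding 1 2 ..
  qed
  also have "\<dots> = C *\<^sub>v b" unfolding CGC ..
  also have "b \<bullet> (C *\<^sub>v b) = (C *\<^sub>v b) \<bullet> b" by (rule dot_comm[OF b]) (use Cc b in simp)
  also have "\<dots> = (B *\<^sub>v (X *\<^sub>v b)) \<bullet> (X *\<^sub>v b)" unfolding Cb by (rule transpose_vec_mult_scalar[OF X b BXb])
  also have "\<dots> = (B *\<^sub>v (B *\<^sub>v (X *\<^sub>v b))) \<bullet> (X *\<^sub>v b)" using Bid[OF Xb] by simp
  also have "\<dots> = (B *\<^sub>v (X *\<^sub>v b)) \<bullet> (B *\<^sub>v (X *\<^sub>v b))" by (rule Bsym[OF BXb Xb])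
  also have "\<dots> = (Pi *\<^sub>v Y) \<bullet> (Pi *\<^sub>v Y)" using PiY Acv[OF b] by simp
  also have "\<dots> = Y \<bullet> (Pi *\<^sub>v Y)"
  proof -
    have "(Y - Pi *\<^sub>v Y) \<bullet> (Pi *\<^sub>v Y) = Y \<bullet> (Pi *\<^sub>v Y) - (Pi *\<^sub>v Y) \<bullet> (Pi *\<^sub>v Y)"
      by (rule dot_minus_l[of _ n]) (use Y Pic in auto)
    moreover have "(Y - Pi *\<^sub>v Y) \<bullet> (Pi *\<^sub>v Y) = 0" using isprojD(3)[OF Pi Y isprojD(2)[OF Pi Y]] .
    ultimately show ?thesis by simp
  qed
  finally show ?thesis unfolding Q_def G_def C_def .
qed



lemma Xd_carrier: "Xd n m a lev j \<in> carrier_mat n (ncols m a j)"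
  unfolding Xd_def ncols_def by auto

lemma dim_Xd[simp]: "dim_row (Xd n m a lev j) = n" "dim_col (Xd n m a lev j) = ncols m a j"
  using Xd_carrier[of n m a lev j] by auto

lemma X_apply:
  assumes j: "j \<noteq> Suc m" and c: "c \<in> carrier_vec (a j)" and u: "u < n" and l: "lev j u < a j"
  shows "(Xd n m a lev j *\<^sub>v c) $ u = c $ (lev j u)"
proof -
  have "(Xd n m a lev j *\<^sub>v c) $ u = (\<Sum>t\<in>{0..<a j}. (if lev j u = t then 1 else 0) * c $ t)"
    using j c u by (simp add: Xd_def scalar_prod_def)
  also have "\<dots> = (\<Sum>t\<in>{0..<a j}. if lev j u = t then c $ t else 0)" by (rule sum.cong) auto
  also have "\<dots> = c $ (lev j u)" using l by (simp add: sum.delta)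
  finally show ?thesis .
qed

lemma XT_apply:
  assumes j: "j \<noteq> Suc m" and z: "z \<in> carrier_vec n" and t: "t < a j"
  shows "(transpose_mat (Xd n m a lev j) *\<^sub>v z) $ t = (\<Sum>u\<in>{0..<n}. if lev j u = t then z $ u else 0)"
proof -
  have "(transpose_mat (Xd n m a lev j) *\<^sub>v z) $ t = (\<Sum>u\<in>{0..<n}. (if lev j u = t then 1 else 0) * z $ u)"
    using j z t by (simp add: Xd_def scalar_prod_def)
  also have "\<dots> = (\<Sum>u\<in>{0..<n}. if lev j u = t then z $ u else 0)" by (rule sum.cong) auto
  finally show ?thesis .
qed

lemma XsT_apply:
  assumes z: "z \<in> carrier_vec n"
  shows "transpose_mat (Xd n m a lev (Suc m)) *\<^sub>v z = vec 1 (\<lambda>_. \<Sum>u\<in>{0..<n}. z $ u)"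
  by (rule eq_vecI) (use z in \<open>auto simp: Xd_def scalar_prod_def\<close>)

definition vsum :: "nat \<Rightarrow> 'j set \<Rightarrow> ('j \<Rightarrow> real vec) \<Rightarrow> real vec" where
  "vsum n J f = vec n (\<lambda>u. \<Sum>j\<in>J. f j $ u)"

lemma vsum_carrier[simp]: "vsum n J f \<in> carrier_vec n" unfolding vsum_def by simp

lemma vsum_mult:
  fixes A :: "real mat"
  assumes A: "A \<in> carrier_mat nr nc" and f: "\<And>j. j \<in> J \<Longrightarrow> f j \<in> carrier_vec nc"
  shows "A *\<^sub>v vsum nc J f = vsum nr J (\<lambda>j. A *\<^sub>v f j)"
proof (rule eq_vecI)
  fix i assume "i < dim_vec (vsum nr J (\<lambda>j. A *\<^sub>v f j))"
  hence i: "i < nr" by (simp add: vsum_def)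
  have "(A *\<^sub>v vsum nc J f) $ i = (\<Sum>t\<in>{0..<nc}. A $$ (i,t) * (\<Sum>j\<in>J. f j $ t))"
    using A i by (simp add: vsum_def scalar_prod_def)
  also have "\<dots> = (\<Sum>j\<in>J. \<Sum>t\<in>{0..<nc}. A $$ (i,t) * f j $ t)"
    by (simp add: sum_distrib_left sum.swap[of _ J])
  also have "\<dots> = vsum nr J (\<lambda>j. A *\<^sub>v f j) $ i"
  proof -
    have "(\<Sum>t\<in>{0..<nc}. A $$ (i,t) * f j $ t) = (A *\<^sub>v f j) $ i" if j: "j \<in> J" for j
      using A i f[OF j] by (simp add: scalar_prod_def)
    thus ?thesis using A i by (simp add: vsum_def)
  qed
  finally show "(A *\<^sub>v vsum nc J f) $ i = vsum nr J (\<lambda>j. A *\<^sub>v f j) $ i" .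
qed (use A in \<open>simp add: vsum_def\<close>)

lemma dot_vsum:
  fixes w :: "real vec"
  assumes w: "w \<in> carrier_vec n" and f: "\<And>j. j \<in> J \<Longrightarrow> f j \<in> carrier_vec n"
  shows "w \<bullet> vsum n J f = (\<Sum>j\<in>J. w \<bullet> f j)"
proof -
  have "w \<bullet> vsum n J f = (\<Sum>u\<in>{0..<n}. w $ u * (\<Sum>j\<in>J. f j $ u))"
    by (simp add: vsum_def scalar_prod_def)
  also have "\<dots> = (\<Sum>j\<in>J. \<Sum>u\<in>{0..<n}. w $ u * f j $ u)"
    by (simp add: sum_distrib_left sum.swap[of _ J])
  also have "\<dots> = (\<Sum>j\<in>J. w \<bullet> f j)"
  proof (rule sum.cong)
    fix j assume "j \<in> J"
    hence "dim_vec (f j) = n" using f by auto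
    thus "(\<Sum>u\<in>{0..<n}. w $ u * f j $ u) = w \<bullet> f j" by (simp add: scalar_prod_def)
  qed simp
  finally show ?thesis .
qed

lemma vsum_zero:
  assumes "\<And>j. j \<in> J \<Longrightarrow> f j = 0\<^sub>v n"
  shows "vsum n J f = 0\<^sub>v n"
  by (rule eq_vecI) (use assms in \<open>auto simp: vsum_def\<close>)

lemma vsum_remove:
  assumes J: "finite J" "j0 \<in> J" and f: "f j0 \<in> carrier_vec n"
  shows "vsum n J f = f j0 + vsum n (J - {j0}) f"
  by (rule eq_vecI) (use J f in \<open>auto simp: vsum_def sum.remove\<close>)

lemma colspace_subsp: "subsp n (colspace n m a lev S)"
  unfolding subsp_def
proof (intro conjI ballI)
  show "colspace n m a lev S \<subseteq> carrier_vec n" by (auto simp: colspace_def)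
  fix x y assume x: "x \<in> colspace n m a lev S" and y: "y \<in> colspace n m a lev S"
  obtain c1 where c1: "\<forall>j\<in>S. c1 j \<in> carrier_vec (ncols m a j)"
    "x = vec n (\<lambda>u. \<Sum>j\<in>S. (Xd n m a lev j *\<^sub>v c1 j) $ u)" using x unfolding colspace_def by blast
  obtain c2 where c2: "\<forall>j\<in>S. c2 j \<in> carrier_vec (ncols m a j)"
    "y = vec n (\<lambda>u. \<Sum>j\<in>S. (Xd n m a lev j *\<^sub>v c2 j) $ u)" using y unfolding colspace_def by blast
  have e: "(\<Sum>j\<in>S. (Xd n m a lev j *\<^sub>v (c1 j - c2 j)) $ u) =
     (\<Sum>j\<in>S. (Xd n m a lev j *\<^sub>v c1 j) $ u) - (\<Sum>j\<in>S. (Xd n m a lev j *\<^sub>v c2 j) $ u)" if u: "u < n" for u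
  proof -
    have "(\<Sum>j\<in>S. (Xd n m a lev j *\<^sub>v (c1 j - c2 j)) $ u) =
       (\<Sum>j\<in>S. (Xd n m a lev j *\<^sub>v c1 j) $ u - (Xd n m a lev j *\<^sub>v c2 j) $ u)"
    proof (rule sum.cong)
      fix j assume j: "j \<in> S"
      have "Xd n m a lev j *\<^sub>v (c1 j - c2 j) = Xd n m a lev j *\<^sub>v c1 j - Xd n m a lev j *\<^sub>v c2 j"
        by (rule mult_minus_distrib_mat_vec[OF Xd_carrier]) (use c1 c2 j in auto)
      thus "(Xd n m a lev j *\<^sub>v (c1 j - c2 j)) $ u = (Xd n m a lev j *\<^sub>v c1 j) $ u - (Xd n m a lev j *\<^sub>v c2 j) $ u"
        using u Xd_carrier[of n m a lev j] by simp
    qed simp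
    thus ?thesis by (simp add: sum_subtractf)
  qed
  have "x - y = vec n (\<lambda>u. \<Sum>j\<in>S. (Xd n m a lev j *\<^sub>v (c1 j - c2 j)) $ u)"
    unfolding c1(2) c2(2) by (rule eq_vecI) (simp_all add: e del: index_mult_mat_vec)
  moreover have "\<forall>j\<in>S. c1 j - c2 j \<in> carrier_vec (ncols m a j)" using c1 c2 by auto
  ultimately show "x - y \<in> colspace n m a lev S" unfolding colspace_def mem_Collect_eq
    by (intro exI[of _ "\<lambda>j. c1 j - c2 j"]) simp
qed

lemma colspace_proj:
  assumes S: "finite S" and P: "P \<in> carrier_mat n n"
    and mem: "\<And>v. v \<in> carrier_vec n \<Longrightarrow> \<exists>c. (\<forall>j\<in>S. c j \<in> carrier_vec (ncols m a j)) \<and>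
         P *\<^sub>v v = vec n (\<lambda>u. \<Sum>j\<in>S. (Xd n m a lev j *\<^sub>v c j) $ u)"
    and orth: "\<And>v j. v \<in> carrier_vec n \<Longrightarrow> j \<in> S \<Longrightarrow>
         transpose_mat (Xd n m a lev j) *\<^sub>v (v - P *\<^sub>v v) = 0\<^sub>v (ncols m a j)"
  shows "isproj n P (colspace n m a lev S)"
  unfolding isproj_def
proof (intro conjI ballI)
  show "P \<in> carrier_mat n n" by (rule P)
  fix v :: "real vec" assume v: "v \<in> carrier_vec n"
  show "P *\<^sub>v v \<in> colspace n m a lev S" using mem[OF v] unfolding colspace_def by blast
  fix w assume "w \<in> colspace n m a lev S"
  then obtain c where c: "\<forall>j\<in>S. c j \<in> carrier_vec (ncols m a j)"
    and w: "w = vec n (\<lambda>u. \<Sum>j\<in>S. (Xd n m a lev j *\<^sub>v c j) $ u)" unfolding colspace_def by blast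
  define d where "d = v - P *\<^sub>v v"
  have dc: "d \<in> carrier_vec n" unfolding d_def using v P by simp
  have wv: "w = vsum n S (\<lambda>j. Xd n m a lev j *\<^sub>v c j)" unfolding w vsum_def ..
  hence "d \<bullet> w = (\<Sum>j\<in>S. d \<bullet> (Xd n m a lev j *\<^sub>v c j))"
  proof -
    have "\<And>j. Xd n m a lev j *\<^sub>v c j \<in> carrier_vec n"
      by (intro carrier_vecI) (simp add: carrier_matD(1)[OF Xd_carrier])
    thus ?thesis using dot_vsum[OF dc, of S "\<lambda>j. Xd n m a lev j *\<^sub>v c j"] wv by simp
  qed
  also have "\<dots> = (\<Sum>j\<in>S. (transpose_mat (Xd n m a lev j) *\<^sub>v d) \<bullet> c j)"
  proof (rule sum.cong)
    fix j assume j: "j \<in> S"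
    show "d \<bullet> (Xd n m a lev j *\<^sub>v c j) = (transpose_mat (Xd n m a lev j) *\<^sub>v d) \<bullet> c j"
      by (rule adj[OF Xd_carrier]) (use c dc j in auto)
  qed simp
  also have "\<dots> = 0" using orth[OF v] c unfolding d_def by simp
  finally show "(v - P *\<^sub>v v) \<bullet> w = 0" unfolding d_def .
qed

lemma Proj_eq:
  assumes "isproj n P (colspace n m a lev S)"
  shows "Proj n m a lev S = P"
  unfolding Proj_def
proof (rule the_equality)
  show "P \<in> carrier_mat n n \<and> (\<forall>v\<in>carrier_vec n. P *\<^sub>v v \<in> colspace n m a lev S \<and>
      (\<forall>w\<in>colspace n m a lev S. (v - P *\<^sub>v v) \<bullet> w = 0))" using assms unfolding isproj_def .
  fix P' assume "P' \<in> carrier_mat n n \<and> (\<forall>v\<in>carrier_vec n. P' *\<^sub>v v \<in> colspace n m a lev S \<and>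
      (\<forall>w\<in>colspace n m a lev S. (v - P' *\<^sub>v v) \<bullet> w = 0))"
  hence "isproj n P' (colspace n m a lev S)" unfolding isproj_def .
  thus "P' = P" using proj_unique[OF _ assms colspace_subsp] by blast
qed



lemma minus_self_vec: "(x :: real vec) \<in> carrier_vec k \<Longrightarrow> x - x = 0\<^sub>v k"
  by (rule eq_vecI) auto

locale plan =
  fixes n m :: nat and a :: "nat \<Rightarrow> nat" and lev :: "nat \<Rightarrow> nat \<Rightarrow> nat"
  assumes m2: "m \<ge> 2"
    and lev_range: "\<And>i u. i \<in> {1..m} \<Longrightarrow> u < n \<Longrightarrow> lev i u < a i"
    and all_levels: "\<And>i t. i \<in> {1..m} \<Longrightarrow> t < a i \<Longrightarrow> \<exists>u<n. lev i u = t"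
    and orth: "\<And>i j. i \<in> {1..m-1} \<Longrightarrow> j \<in> {1..m-1} \<Longrightarrow> i \<noteq> j \<Longrightarrow>
       Nmat n m a lev i j = Nmat n m a lev i m * Rinv n m a lev m * Nmat n m a lev m j"
begin

abbreviation "X \<equiv> Xd n m a lev"
abbreviation "Rm \<equiv> Rinv n m a lev m"
definition "Pm = X m * Rm * transpose_mat (X m)"

lemma mm: "m \<in> {1..m}" using m2 by auto

lemma ncols_le: "j \<le> m \<Longrightarrow> ncols m a j = a j" unfolding ncols_def by auto

lemma nc: "i \<in> {1..m} \<Longrightarrow> ncols m a i = a i" unfolding ncols_def by auto

lemma Xc: "i \<in> {1..m} \<Longrightarrow> X i \<in> carrier_mat n (a i)" using Xd_carrier[of n m a lev i] nc by simp

lemma Xmc: "X m \<in> carrier_mat n (a m)" using Xc[OF mm] .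

lemma Rmc: "Rm \<in> carrier_mat (a m) (a m)" unfolding Rinv_def using nc[OF mm] by simp

lemma Pmc: "Pm \<in> carrier_mat n n" unfolding Pm_def using Xmc Rmc by simp

lemma rvec_eq:
  assumes i: "i \<in> {1..m}" and t: "t < a i"
  shows "rvec n m a lev i $ t = (\<Sum>u\<in>{0..<n}. if lev i u = t then 1 else 0)"
proof -
  have "rvec n m a lev i $ t = (\<Sum>u\<in>{0..<n}. if lev i u = t then vec n (\<lambda>_. 1) $ u else 0)"
    unfolding rvec_def using XT_apply[of i m "vec n (\<lambda>_. 1)" n t a lev] i t by simp
  also have "\<dots> = (\<Sum>u\<in>{0..<n}. if lev i u = t then 1 else 0)" by (rule sum.cong) auto
  finally show ?thesis .
qed

lemma rvec_pos:
  assumes i: "i \<in> {1..m}" and t: "t < a i"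
  shows "rvec n m a lev i $ t > 0"
proof -
  obtain u where u: "u < n" "lev i u = t" using all_levels[OF i t] by blast
  have "(1::real) \<le> (\<Sum>u\<in>{0..<n}. if lev i u = t then 1 else 0)"
    using member_le_sum[of u "{0..<n}" "\<lambda>u. if lev i u = t then (1::real) else 0"] u by auto
  thus ?thesis using rvec_eq[OF i t] by simp
qed

lemma N_apply:
  assumes b: "b \<in> carrier_vec (ncols m a j)"
  shows "Nmat n m a lev i j *\<^sub>v b = transpose_mat (X i) *\<^sub>v (X j *\<^sub>v b)"
  unfolding Nmat_def by (rule assoc_mult_mat_vec) (use b Xd_carrier in auto)

lemma Nii:
  assumes i: "i \<in> {1..m}"
  shows "Nmat n m a lev i i = Rmat n m a lev i"
proof (rule eq_matI)
  fix s t assume s: "s < dim_row (Rmat n m a lev i)" and t: "t < dim_col (Rmat n m a lev i)"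
  hence s': "s < a i" and t': "t < a i" using nc[OF i] by (auto simp: Rmat_def mat_diag_def)
  have ii: "i \<noteq> Suc m" using i by auto
  have colX: "col (X i) t = vec n (\<lambda>u. if lev i u = t then 1 else 0)"
    by (rule eq_vecI) (use t' ii in \<open>auto simp: Xd_def\<close>)
  have "Nmat n m a lev i i $$ (s,t) = (transpose_mat (X i) *\<^sub>v col (X i) t) $ s"
    unfolding Nmat_def using s' t' nc[OF i] by simp
  also have "\<dots> = (\<Sum>u\<in>{0..<n}. if lev i u = s then (if lev i u = t then 1 else 0) else 0)"
    unfolding colX by (subst XT_apply[of i m "vec n (\<lambda>u. if lev i u = t then 1 else 0)" n s a lev])
      (use ii s' in \<open>auto intro!: sum.cong\<close>)
  also have "\<dots> = Rmat n m a lev i $$ (s,t)"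
  proof (cases "s = t")
    case True
    have "(\<Sum>u\<in>{0..<n}. if lev i u = s then (if lev i u = t then 1 else 0) else 0) =
        (\<Sum>u\<in>{0..<n}. if lev i u = t then (1::real) else 0)" unfolding True by (rule sum.cong) auto
    thus ?thesis using rvec_eq[OF i t'] s' t' nc[OF i] True by (simp add: Rmat_def mat_diag_def)
  next
    case False
    thus ?thesis using s' t' nc[OF i] by (auto simp: Rmat_def mat_diag_def intro!: sum.neutral)
  qed
  finally show "Nmat n m a lev i i $$ (s,t) = Rmat n m a lev i $$ (s,t)" .
qed (use nc[OF i] in \<open>auto simp: Nmat_def Rmat_def mat_diag_def\<close>)

lemma RRinv: "Rmat n m a lev m * Rm = 1\<^sub>m (a m)"
proof -
  have "Rmat n m a lev m * Rm = mat_diag (a m) (\<lambda>t. rvec n m a lev m $ t * (1 / rvec n m a lev m $ t))"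
    unfolding Rmat_def Rinv_def nc[OF mm] by simp
  also have "\<dots> = 1\<^sub>m (a m)"
  proof (rule eq_matI)
    fix i j assume i: "i < dim_row (1\<^sub>m (a m))" and j: "j < dim_col (1\<^sub>m (a m))"
    hence i': "i < a m" and j': "j < a m" by auto
    have p: "rvec n m a lev m $ j > 0" by (rule rvec_pos[OF mm j'])
    show "mat_diag (a m) (\<lambda>t. rvec n m a lev m $ t * (1 / rvec n m a lev m $ t)) $$ (i, j) = 1\<^sub>m (a m) $$ (i, j)"
      using i' j' p by (simp add: mat_diag_def)
  qed (auto simp: mat_diag_def)
  finally show ?thesis .
qed

lemma Rm_T: "transpose_mat Rm = Rm"
  by (rule eq_matI) (auto simp: Rinv_def mat_diag_def)

lemma Rm_sym:
  assumes u: "u \<in> carrier_vec (a m)" and v: "v \<in> carrier_vec (a m)"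
  shows "(Rm *\<^sub>v u) \<bullet> v = u \<bullet> (Rm *\<^sub>v v)"
proof -
  have "(transpose_mat Rm *\<^sub>v u) \<bullet> v = u \<bullet> (Rm *\<^sub>v v)" by (rule transpose_vec_mult_scalar[OF Rmc v u])
  thus ?thesis unfolding Rm_T .
qed

lemma Pm_apply:
  assumes v: "v \<in> carrier_vec n"
  shows "Pm *\<^sub>v v = X m *\<^sub>v (Rm *\<^sub>v (transpose_mat (X m) *\<^sub>v v))"
proof -
  have 1: "(X m * Rm * transpose_mat (X m)) *\<^sub>v v = (X m * Rm) *\<^sub>v (transpose_mat (X m) *\<^sub>v v)"
    by (rule assoc_mult_mat_vec[of _ n "a m"]) (use Xmc Rmc v in auto)
  have 2: "(X m * Rm) *\<^sub>v (transpose_mat (X m) *\<^sub>v v) = X m *\<^sub>v (Rm *\<^sub>v (transpose_mat (X m) *\<^sub>v v))"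
    by (rule assoc_mult_mat_vec[of _ n "a m"]) (use Xmc Rmc v in auto)
  show ?thesis unfolding Pm_def 1 2 ..
qed

lemma XmXm:
  assumes w: "w \<in> carrier_vec (a m)"
  shows "transpose_mat (X m) *\<^sub>v (X m *\<^sub>v w) = Rmat n m a lev m *\<^sub>v w"
  using N_apply[of w m m] Nii[OF mm] w nc[OF mm] by simp

lemma H1:
  assumes v: "v \<in> carrier_vec n"
  shows "transpose_mat (X m) *\<^sub>v (Pm *\<^sub>v v) = transpose_mat (X m) *\<^sub>v v"
proof -
  define y where "y = transpose_mat (X m) *\<^sub>v v"
  have y: "y \<in> carrier_vec (a m)" unfolding y_def using Xmc v by simp
  have "transpose_mat (X m) *\<^sub>v (Pm *\<^sub>v v) = Rmat n m a lev m *\<^sub>v (Rm *\<^sub>v y)"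
    unfolding Pm_apply[OF v] y_def[symmetric] by (rule XmXm) (use Rmc y in simp)
  also have "\<dots> = (Rmat n m a lev m * Rm) *\<^sub>v y"
    by (rule assoc_mult_mat_vec[symmetric, of _ "a m" "a m"]) (use Rmc y nc[OF mm] in \<open>auto simp: Rmat_def\<close>)
  also have "\<dots> = y" unfolding RRinv using y by simp
  finally show ?thesis unfolding y_def .
qed

lemma H1':
  assumes y: "y \<in> carrier_vec n"
  shows "transpose_mat (X m) *\<^sub>v (y - Pm *\<^sub>v y) = 0\<^sub>v (a m)"
proof -
  have "transpose_mat (X m) *\<^sub>v (y - Pm *\<^sub>v y) = transpose_mat (X m) *\<^sub>v y - transpose_mat (X m) *\<^sub>v (Pm *\<^sub>v y)"
    by (rule mult_minus_distrib_mat_vec[of _ "a m" n]) (use Xmc Pmc y in auto)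
  also have "\<dots> = 0\<^sub>v (a m)" unfolding H1[OF y] by (rule minus_self_vec) (use Xmc y in simp)
  finally show ?thesis .
qed

lemma Pm_sym:
  assumes u: "u \<in> carrier_vec n" and v: "v \<in> carrier_vec n"
  shows "(Pm *\<^sub>v u) \<bullet> v = u \<bullet> (Pm *\<^sub>v v)"
proof -
  define xu where "xu = transpose_mat (X m) *\<^sub>v u"
  define xv where "xv = transpose_mat (X m) *\<^sub>v v"
  have c: "xu \<in> carrier_vec (a m)" "xv \<in> carrier_vec (a m)" unfolding xu_def xv_def using u v Xmc by auto
  have "(Pm *\<^sub>v u) \<bullet> v = v \<bullet> (X m *\<^sub>v (Rm *\<^sub>v xu))" unfolding Pm_apply[OF u] xu_def[symmetric]
    by (rule dot_comm[of _ n]) (use Xmc Rmc c v in auto)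
  also have "\<dots> = xv \<bullet> (Rm *\<^sub>v xu)" unfolding xv_def
    by (rule transpose_vec_mult_scalar[symmetric, OF Xmc _ v]) (use Rmc c in auto)
  also have "\<dots> = (Rm *\<^sub>v xu) \<bullet> xv" by (rule dot_comm[of _ "a m"]) (use Rmc c in auto)
  also have "\<dots> = xu \<bullet> (Rm *\<^sub>v xv)" by (rule Rm_sym[OF c])
  also have "\<dots> = u \<bullet> (X m *\<^sub>v (Rm *\<^sub>v xv))" unfolding xu_def
    by (rule transpose_vec_mult_scalar[OF Xmc _ u]) (use Rmc c in auto)
  also have "\<dots> = u \<bullet> (Pm *\<^sub>v v)" unfolding Pm_apply[OF v] xv_def ..
  finally show ?thesis .
qed

lemma H5:
  assumes z: "z \<in> carrier_vec n" and h: "transpose_mat (X m) *\<^sub>v z = 0\<^sub>v (a m)"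
  shows "transpose_mat (X (Suc m)) *\<^sub>v z = 0\<^sub>v 1"
proof -
  have mS: "m \<noteq> Suc m" by simp
  have "(\<Sum>u\<in>{0..<n}. z $ u) = (\<Sum>u\<in>{0..<n}. \<Sum>t\<in>{0..<a m}. if lev m u = t then z $ u else 0)"
    by (rule sum.cong) (use lev_range[OF mm] in \<open>auto simp: sum.delta'\<close>)
  also have "\<dots> = (\<Sum>t\<in>{0..<a m}. \<Sum>u\<in>{0..<n}. if lev m u = t then z $ u else 0)" by (rule sum.swap)
  also have "\<dots> = (\<Sum>t\<in>{0..<a m}. (transpose_mat (X m) *\<^sub>v z) $ t)"
    by (rule sum.cong) (use XT_apply[OF mS z] in auto)
  also have "\<dots> = 0" unfolding h by simp
  finally show ?thesis unfolding XsT_apply[OF z] by (intro eq_vecI) auto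
qed


lemma jrange: "j \<in> {1..m-1} \<Longrightarrow> j \<in> {1..m}" "j \<in> {1..m-1} \<Longrightarrow> j \<noteq> m"
  "j \<in> {1..m-1} \<Longrightarrow> j \<noteq> Suc m" by auto

lemma IPXc: "j \<in> {1..m} \<Longrightarrow> (1\<^sub>m n - Pm) * X j \<in> carrier_mat n (a j)"
  by (rule mult_carrier_mat[OF minus_carrier_mat[OF Pmc] Xc])

definition "Pr j = (SOME P. isproj n P (cs ((1\<^sub>m n - Pm) * X j)))"

lemma PrP: assumes j: "j \<in> {1..m}" shows "isproj n (Pr j) (cs ((1\<^sub>m n - Pm) * X j))"
  unfolding Pr_def by (rule someI_ex[OF proj_exists_cs[OF IPXc[OF j]]])

lemma Prc: "j \<in> {1..m} \<Longrightarrow> Pr j \<in> carrier_mat n n" using isprojD(1)[OF PrP] by blast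

lemma IPX_apply:
  assumes j: "j \<in> {1..m}" and b: "b \<in> carrier_vec (a j)"
  shows "((1\<^sub>m n - Pm) * X j) *\<^sub>v b = X j *\<^sub>v b - Pm *\<^sub>v (X j *\<^sub>v b)"
proof -
  have "((1\<^sub>m n - Pm) * X j) *\<^sub>v b = (1\<^sub>m n - Pm) *\<^sub>v (X j *\<^sub>v b)"
    by (rule assoc_mult_mat_vec[of _ n n]) (use Pmc Xc[OF j] b in auto)
  also have "\<dots> = X j *\<^sub>v b - Pm *\<^sub>v (X j *\<^sub>v b)"
    by (rule IP_apply[OF Pmc]) (use Xc[OF j] b in auto)
  finally show ?thesis .
qed

lemma Pr_form:
  assumes j: "j \<in> {1..m}" and v: "v \<in> carrier_vec n"
  shows "\<exists>b\<in>carrier_vec (a j). Pr j *\<^sub>v v = X j *\<^sub>v b - Pm *\<^sub>v (X j *\<^sub>v b)"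
proof -
  have "Pr j *\<^sub>v v \<in> cs ((1\<^sub>m n - Pm) * X j)" by (rule isprojD(2)[OF PrP[OF j] v])
  then obtain b where b: "b \<in> carrier_vec (a j)" and e: "Pr j *\<^sub>v v = ((1\<^sub>m n - Pm) * X j) *\<^sub>v b"
    unfolding cs_def using IPXc[OF j] by auto
  show ?thesis by (intro bexI[of _ b]) (simp_all add: e IPX_apply[OF j b] b)
qed

lemma Pr_c: "j \<in> {1..m} \<Longrightarrow> v \<in> carrier_vec n \<Longrightarrow> Pr j *\<^sub>v v \<in> carrier_vec n"
  by (rule mult_mat_vec_carrier[OF Prc])

lemma H2:
  assumes j: "j \<in> {1..m}" and v: "v \<in> carrier_vec n"
  shows "transpose_mat (X m) *\<^sub>v (Pr j *\<^sub>v v) = 0\<^sub>v (a m)"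
proof -
  obtain b where b: "b \<in> carrier_vec (a j)" and e: "Pr j *\<^sub>v v = X j *\<^sub>v b - Pm *\<^sub>v (X j *\<^sub>v b)"
    using Pr_form[OF j v] by blast
  show ?thesis unfolding e by (rule H1') (use Xc[OF j] b in simp)
qed

lemma H3:
  assumes i: "i \<in> {1..m-1}" and j: "j \<in> {1..m-1}" and ij: "i \<noteq> j" and v: "v \<in> carrier_vec n"
  shows "transpose_mat (X i) *\<^sub>v (Pr j *\<^sub>v v) = 0\<^sub>v (a i)"
proof -
  have i': "i \<in> {1..m}" and j': "j \<in> {1..m}" using i j by auto
  obtain b where b: "b \<in> carrier_vec (a j)" and e: "Pr j *\<^sub>v v = X j *\<^sub>v b - Pm *\<^sub>v (X j *\<^sub>v b)"
    using Pr_form[OF j' v] by blast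
  define y where "y = X j *\<^sub>v b"
  have yc: "y \<in> carrier_vec n" unfolding y_def using Xc[OF j'] b by simp
  have bc: "b \<in> carrier_vec (ncols m a j)" using b nc[OF j'] by simp
  have 1: "transpose_mat (X i) *\<^sub>v y = Nmat n m a lev i j *\<^sub>v b" unfolding y_def using N_apply[OF bc] by simp
  define w where "w = Nmat n m a lev m j *\<^sub>v b"
  have w': "w = transpose_mat (X m) *\<^sub>v y" unfolding w_def y_def using N_apply[OF bc] by simp
  have wc: "w \<in> carrier_vec (a m)" unfolding w' by (intro carrier_vecI) (use nc[OF mm] in simp)
  have wc': "Rm *\<^sub>v w \<in> carrier_vec (ncols m a m)" using Rmc wc nc[OF mm] by simp
  have "transpose_mat (X i) *\<^sub>v (Pm *\<^sub>v y) = transpose_mat (X i) *\<^sub>v (X m *\<^sub>v (Rm *\<^sub>v w))"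
    unfolding Pm_apply[OF yc] w' ..
  also have "\<dots> = Nmat n m a lev i m *\<^sub>v (Rm *\<^sub>v w)" using N_apply[OF wc'] by simp
  also have "\<dots> = (Nmat n m a lev i m * Rm) *\<^sub>v w"
    by (rule assoc_mult_mat_vec[symmetric, of _ "a i" "a m"]) (use Xc[OF i'] Xmc Rmc wc in \<open>auto simp: Nmat_def\<close>)
  also have "\<dots> = (Nmat n m a lev i m * Rm * Nmat n m a lev m j) *\<^sub>v b" unfolding w_def
    by (rule assoc_mult_mat_vec[symmetric, of _ "a i" "a m"]) (use Xc[OF i'] Xc[OF j'] Xmc Rmc b in \<open>auto simp: Nmat_def\<close>)
  also have "\<dots> = Nmat n m a lev i j *\<^sub>v b" using orth[OF i j ij] by simp
  finally have 2: "transpose_mat (X i) *\<^sub>v (Pm *\<^sub>v y) = Nmat n m a lev i j *\<^sub>v b" .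
  have "transpose_mat (X i) *\<^sub>v (y - Pm *\<^sub>v y) = transpose_mat (X i) *\<^sub>v y - transpose_mat (X i) *\<^sub>v (Pm *\<^sub>v y)"
    by (rule mult_minus_distrib_mat_vec[of _ "a i" n]) (use Xc[OF i'] Pmc yc in auto)
  also have "\<dots> = 0\<^sub>v (a i)" unfolding 1 2 by (rule minus_self_vec) (use Xc[OF i'] Xc[OF j'] b in \<open>simp add: Nmat_def\<close>)
  finally show ?thesis unfolding e y_def .
qed

lemma Pm_Pr:
  assumes j: "j \<in> {1..m}" and v: "v \<in> carrier_vec n"
  shows "Pm *\<^sub>v (Pr j *\<^sub>v v) = 0\<^sub>v n"
proof -
  have "Rm *\<^sub>v 0\<^sub>v (a m) = 0\<^sub>v (a m)" by (rule eq_vecI) (use Rmc in auto)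
  moreover have "X m *\<^sub>v 0\<^sub>v (a m) = 0\<^sub>v n" by (rule eq_vecI) (use Xmc in auto)
  ultimately show ?thesis unfolding Pm_apply[OF Pr_c[OF j v]] H2[OF j v] by simp
qed

lemma H4:
  assumes j: "j \<in> {1..m}" and v: "v \<in> carrier_vec n"
  shows "transpose_mat (X j) *\<^sub>v (v - Pm *\<^sub>v v - Pr j *\<^sub>v v) = 0\<^sub>v (a j)"
proof (rule vec_zero_dot)
  show "transpose_mat (X j) *\<^sub>v (v - Pm *\<^sub>v v - Pr j *\<^sub>v v) \<in> carrier_vec (a j)"
    by (intro carrier_vecI) (use nc[OF j] in simp)
  fix c :: "real vec" assume c: "c \<in> carrier_vec (a j)"
  define x where "x = X j *\<^sub>v c"
  have xc: "x \<in> carrier_vec n" unfolding x_def using Xc[OF j] c by simp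
  define p where "p = Pr j *\<^sub>v v"
  have pc: "p \<in> carrier_vec n" unfolding p_def using Pr_c[OF j v] .
  have Pmv: "Pm *\<^sub>v v \<in> carrier_vec n" using Pmc v by simp
  have Pmx: "Pm *\<^sub>v x \<in> carrier_vec n" using Pmc xc by simp
  have vp: "v - p \<in> carrier_vec n" using v pc by simp
  have "((1\<^sub>m n - Pm) * X j) *\<^sub>v c \<in> cs ((1\<^sub>m n - Pm) * X j)" by (rule cs_mem[OF IPXc[OF j] c])
  hence e1: "(v - p) \<bullet> (x - Pm *\<^sub>v x) = 0"
    using isprojD(3)[OF PrP[OF j] v] IPX_apply[OF j c] unfolding p_def x_def by simp
  have e2: "(v - p) \<bullet> x = (v - p) \<bullet> (Pm *\<^sub>v x)"
    using e1 dot_minus_r[OF xc Pmx vp] by simp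
  have "Pm *\<^sub>v (v - p) = Pm *\<^sub>v v - Pm *\<^sub>v p"
    by (rule mult_minus_distrib_mat_vec[OF Pmc v pc])
  also have "\<dots> = Pm *\<^sub>v v" unfolding p_def Pm_Pr[OF j v] using Pmv by simp
  finally have e3: "Pm *\<^sub>v (v - p) = Pm *\<^sub>v v" .
  have e4: "(v - p) \<bullet> (Pm *\<^sub>v x) = (Pm *\<^sub>v v) \<bullet> x" using Pm_sym[OF vp xc] e3 by simp
  have zz: "v - Pm *\<^sub>v v - p = (v - p) - Pm *\<^sub>v v" by (rule eq_vecI) (use v Pmv pc Pmc in auto)
  have "(transpose_mat (X j) *\<^sub>v (v - Pm *\<^sub>v v - p)) \<bullet> c = (v - Pm *\<^sub>v v - p) \<bullet> x"
    unfolding x_def by (rule transpose_vec_mult_scalar[OF Xc[OF j] c]) (use v Pmv pc in simp)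
  also have "\<dots> = (v - p) \<bullet> x - (Pm *\<^sub>v v) \<bullet> x" unfolding zz by (rule dot_minus_l[OF vp Pmv xc])
  also have "\<dots> = 0" using e2 e4 by simp
  finally show "(transpose_mat (X j) *\<^sub>v (v - Pm *\<^sub>v v - Pr j *\<^sub>v v)) \<bullet> c = 0" unfolding p_def .
qed

definition "PJ J = mat n n (\<lambda>(u,w). Pm $$ (u,w) + (\<Sum>j\<in>J. Pr j $$ (u,w)))"

lemma PJc: "PJ J \<in> carrier_mat n n" unfolding PJ_def by simp

lemma PJ_apply:
  assumes J: "J \<subseteq> {1..m}" and v: "v \<in> carrier_vec n"
  shows "PJ J *\<^sub>v v = Pm *\<^sub>v v + vsum n J (\<lambda>j. Pr j *\<^sub>v v)"
proof (rule eq_vecI)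
  fix u assume "u < dim_vec (Pm *\<^sub>v v + vsum n J (\<lambda>j. Pr j *\<^sub>v v))"
  hence u: "u < n" using Pmc by (simp add: vsum_def)
  have "(PJ J *\<^sub>v v) $ u = (\<Sum>w\<in>{0..<n}. (Pm $$ (u,w) + (\<Sum>j\<in>J. Pr j $$ (u,w))) * v $ w)"
    unfolding PJ_def using u v by (simp add: scalar_prod_def)
  also have "\<dots> = (\<Sum>w\<in>{0..<n}. Pm $$ (u,w) * v $ w) + (\<Sum>j\<in>J. \<Sum>w\<in>{0..<n}. Pr j $$ (u,w) * v $ w)"
    by (simp add: distrib_right sum.distrib sum_distrib_right sum.swap[of _ J])
  also have "\<dots> = (Pm *\<^sub>v v) $ u + (\<Sum>j\<in>J. (Pr j *\<^sub>v v) $ u)"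
  proof -
    have "(\<Sum>w\<in>{0..<n}. Pr j $$ (u,w) * v $ w) = (Pr j *\<^sub>v v) $ u" if j: "j \<in> J" for j
    proof -
      have "j \<in> {1..m}" using J j by auto
      hence "Pr j \<in> carrier_mat n n" by (rule Prc)
      thus ?thesis using u v by (simp add: scalar_prod_def)
    qed
    thus ?thesis using Pmc u v by (simp add: scalar_prod_def)
  qed
  also have "\<dots> = (Pm *\<^sub>v v + vsum n J (\<lambda>j. Pr j *\<^sub>v v)) $ u" using u Pmc by (simp add: vsum_def)
  finally show "(PJ J *\<^sub>v v) $ u = (Pm *\<^sub>v v + vsum n J (\<lambda>j. Pr j *\<^sub>v v)) $ u" .
qed (use Pmc in \<open>simp add: PJ_def vsum_def\<close>)


lemma XT_vP:
  assumes i: "i \<in> {1..m}" and J: "J \<subseteq> {1..m}" and v: "v \<in> carrier_vec n"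
  shows "transpose_mat (X i) *\<^sub>v (v - PJ J *\<^sub>v v) =
     transpose_mat (X i) *\<^sub>v (v - Pm *\<^sub>v v) - vsum (a i) J (\<lambda>j. transpose_mat (X i) *\<^sub>v (Pr j *\<^sub>v v))"
proof -
  have Pv: "Pm *\<^sub>v v \<in> carrier_vec n" using Pmc v by simp
  have fc: "\<And>j. j \<in> J \<Longrightarrow> Pr j *\<^sub>v v \<in> carrier_vec n" using Pr_c J v by auto
  have XiT: "transpose_mat (X i) \<in> carrier_mat (a i) n" using Xc[OF i] by simp
  have "v - PJ J *\<^sub>v v = (v - Pm *\<^sub>v v) - vsum n J (\<lambda>j. Pr j *\<^sub>v v)"
    unfolding PJ_apply[OF J v] by (rule eq_vecI) (use v Pv Pmc in \<open>auto simp: vsum_def\<close>)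
  hence "transpose_mat (X i) *\<^sub>v (v - PJ J *\<^sub>v v) =
      transpose_mat (X i) *\<^sub>v (v - Pm *\<^sub>v v) - transpose_mat (X i) *\<^sub>v vsum n J (\<lambda>j. Pr j *\<^sub>v v)"
    using mult_minus_distrib_mat_vec[OF XiT, of "v - Pm *\<^sub>v v" "vsum n J (\<lambda>j. Pr j *\<^sub>v v)"] v Pv by simp
  also have "transpose_mat (X i) *\<^sub>v vsum n J (\<lambda>j. Pr j *\<^sub>v v) = vsum (a i) J (\<lambda>j. transpose_mat (X i) *\<^sub>v (Pr j *\<^sub>v v))"
    by (rule vsum_mult[OF XiT fc])
  finally show ?thesis .
qed

lemma PJ_proj:
  assumes J: "J \<subseteq> {1..m-1}"
  shows "isproj n (PJ J) (colspace n m a lev (J \<union> {m, Suc m}))"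
proof -
  have Jm: "J \<subseteq> {1..m}" using J by (auto simp: subset_iff)
  have fJ: "finite J" using J finite_subset by blast
  have mJ: "m \<notin> J" "Suc m \<notin> J" using J m2 by (auto simp: subset_iff)
  have Seq: "J \<union> {m, Suc m} = insert m (insert (Suc m) J)" by auto
  show ?thesis
  proof (rule colspace_proj)
    show "finite (J \<union> {m, Suc m})" using fJ by simp
    show "PJ J \<in> carrier_mat n n" by (rule PJc)
  next
    fix v :: "real vec" assume v: "v \<in> carrier_vec n"
    have "\<forall>j\<in>J. \<exists>b. b \<in> carrier_vec (a j) \<and> Pr j *\<^sub>v v = X j *\<^sub>v b - Pm *\<^sub>v (X j *\<^sub>v b)"
      using Pr_form Jm v by blast
    from bchoice[OF this] obtain b where b': "\<forall>j\<in>J. b j \<in> carrier_vec (a j) \<and> Pr j *\<^sub>v v = X j *\<^sub>v b j - Pm *\<^sub>v (X j *\<^sub>v b j)"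
      by blast
    have bjc: "b j \<in> carrier_vec (a j)" if j: "j \<in> J" for j using b' j by blast
    have jm: "j \<in> {1..m}" if j: "j \<in> J" for j using Jm j by blast
    have bc: "X j *\<^sub>v b j \<in> carrier_vec n" if j: "j \<in> J" for j
      by (rule mult_mat_vec_carrier[OF Xc[OF jm[OF j]] bjc[OF j]])
    define e where "e = Rm *\<^sub>v (transpose_mat (X m) *\<^sub>v v)"
    define d where "d j = Rm *\<^sub>v (transpose_mat (X m) *\<^sub>v (X j *\<^sub>v b j))" for j
    have ec: "e \<in> carrier_vec (a m)" unfolding e_def using Rmc Xmc v by simp
    have dc: "\<And>j. d j \<in> carrier_vec (a m)" unfolding d_def by (intro carrier_vecI) (use Rmc in simp)
    define cm where "cm = e - vsum (a m) J d"
    have cmc: "cm \<in> carrier_vec (a m)" unfolding cm_def using ec by simp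
    define c where "c j = (if j = m then cm else if j = Suc m then 0\<^sub>v 1 else b j)" for j
    have cc: "\<forall>j\<in>J \<union> {m, Suc m}. c j \<in> carrier_vec (ncols m a j)"
    proof
      fix j assume j: "j \<in> J \<union> {m, Suc m}"
      show "c j \<in> carrier_vec (ncols m a j)"
      proof (cases "j = m")
        case True thus ?thesis using cmc nc[OF mm] unfolding c_def by simp
      next
        case F: False
        show ?thesis
        proof (cases "j = Suc m")
          case True thus ?thesis unfolding c_def ncols_def by simp
        next
          case False
          hence "j \<in> J" using j F by blast
          thus ?thesis using F False bjc nc[OF jm] unfolding c_def by simp
        qed
      qed
    qed
    have Xcm: "X m *\<^sub>v cm = X m *\<^sub>v e - vsum n J (\<lambda>j. X m *\<^sub>v d j)"
    proof -
      have "X m *\<^sub>v cm = X m *\<^sub>v e - X m *\<^sub>v vsum (a m) J d"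
        unfolding cm_def by (rule mult_minus_distrib_mat_vec[OF Xmc ec]) simp
      also have "X m *\<^sub>v vsum (a m) J d = vsum n J (\<lambda>j. X m *\<^sub>v d j)" by (rule vsum_mult[OF Xmc dc])
      finally show ?thesis .
    qed
    have Pj: "Pr j *\<^sub>v v = X j *\<^sub>v b j - X m *\<^sub>v d j" if j: "j \<in> J" for j
    proof -
      have "Pr j *\<^sub>v v = X j *\<^sub>v b j - Pm *\<^sub>v (X j *\<^sub>v b j)" using b' j by blast
      thus ?thesis unfolding Pm_apply[OF bc[OF j]] d_def .
    qed
    have "PJ J *\<^sub>v v = vec n (\<lambda>u. \<Sum>j\<in>J \<union> {m, Suc m}. (X j *\<^sub>v c j) $ u)"
    proof (rule eq_vecI)
      fix u assume "u < dim_vec (vec n (\<lambda>u. \<Sum>j\<in>J \<union> {m, Suc m}. (X j *\<^sub>v c j) $ u))"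
      hence u: "u < n" by simp
      have "(PJ J *\<^sub>v v) $ u = (X m *\<^sub>v e) $ u + (\<Sum>j\<in>J. (Pr j *\<^sub>v v) $ u)"
        unfolding PJ_apply[OF Jm v] Pm_apply[OF v] e_def[symmetric] using u Pmc by (simp add: vsum_def)
      also have "(\<Sum>j\<in>J. (Pr j *\<^sub>v v) $ u) = (\<Sum>j\<in>J. (X j *\<^sub>v b j) $ u - (X m *\<^sub>v d j) $ u)"
        by (rule sum.cong) (use Pj u Xmc bc in auto)
      also have "\<dots> = (\<Sum>j\<in>J. (X j *\<^sub>v b j) $ u) - (\<Sum>j\<in>J. (X m *\<^sub>v d j) $ u)"
        by (rule sum_subtractf)
      finally have L: "(PJ J *\<^sub>v v) $ u = (X m *\<^sub>v e) $ u + (\<Sum>j\<in>J. (X j *\<^sub>v b j) $ u) - (\<Sum>j\<in>J. (X m *\<^sub>v d j) $ u)"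
        by simp
      have "(\<Sum>j\<in>J \<union> {m, Suc m}. (X j *\<^sub>v c j) $ u) =
          (X m *\<^sub>v c m) $ u + ((X (Suc m) *\<^sub>v c (Suc m)) $ u + (\<Sum>j\<in>J. (X j *\<^sub>v c j) $ u))"
        unfolding Seq using fJ mJ by simp
      also have "(X (Suc m) *\<^sub>v c (Suc m)) $ u = 0" unfolding c_def using u by (simp add: Xd_def)
      also have "(\<Sum>j\<in>J. (X j *\<^sub>v c j) $ u) = (\<Sum>j\<in>J. (X j *\<^sub>v b j) $ u)"
        by (rule sum.cong) (use mJ in \<open>auto simp: c_def\<close>)
      also have "(X m *\<^sub>v c m) $ u = (X m *\<^sub>v e) $ u - (\<Sum>j\<in>J. (X m *\<^sub>v d j) $ u)"
        unfolding c_def using Xcm u Xmc by (simp add: vsum_def)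
      finally have R: "(\<Sum>j\<in>J \<union> {m, Suc m}. (X j *\<^sub>v c j) $ u) =
          (X m *\<^sub>v e) $ u - (\<Sum>j\<in>J. (X m *\<^sub>v d j) $ u) + (\<Sum>j\<in>J. (X j *\<^sub>v b j) $ u)" by simp
      show "(PJ J *\<^sub>v v) $ u = vec n (\<lambda>u. \<Sum>j\<in>J \<union> {m, Suc m}. (X j *\<^sub>v c j) $ u) $ u"
        using L R u by simp
    qed (use PJc in auto)
    thus "\<exists>c. (\<forall>j\<in>J \<union> {m, Suc m}. c j \<in> carrier_vec (ncols m a j)) \<and>
         PJ J *\<^sub>v v = vec n (\<lambda>u. \<Sum>j\<in>J \<union> {m, Suc m}. (X j *\<^sub>v c j) $ u)"
      using cc by blast
  next
    fix v :: "real vec" and j0 assume v: "v \<in> carrier_vec n" and j0: "j0 \<in> J \<union> {m, Suc m}"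
    have Pv: "Pm *\<^sub>v v \<in> carrier_vec n" using Pmc v by simp
    have zm: "transpose_mat (X m) *\<^sub>v (v - PJ J *\<^sub>v v) = 0\<^sub>v (a m)"
    proof -
      have "vsum (a m) J (\<lambda>j. transpose_mat (X m) *\<^sub>v (Pr j *\<^sub>v v)) = 0\<^sub>v (a m)"
        by (rule vsum_zero) (use H2 Jm v in auto)
      thus ?thesis unfolding XT_vP[OF mm Jm v] H1'[OF v] by simp
    qed
    show "transpose_mat (X j0) *\<^sub>v (v - PJ J *\<^sub>v v) = 0\<^sub>v (ncols m a j0)"
    proof -
      consider "j0 = m" | "j0 = Suc m" | "j0 \<in> J" using j0 by auto
      thus ?thesis
      proof cases
        case 1 thus ?thesis using zm nc[OF mm] by simp
      next
        case 2
        have "transpose_mat (X (Suc m)) *\<^sub>v (v - PJ J *\<^sub>v v) = 0\<^sub>v 1"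
          by (rule H5[OF _ zm]) (use v PJc[of J] in simp)
        thus ?thesis using 2 by (simp add: ncols_def)
      next
        case 3
        have j1: "j0 \<in> {1..m-1}" and j': "j0 \<in> {1..m}" using 3 J by (auto simp: subset_iff)
        have Prv: "Pr j0 *\<^sub>v v \<in> carrier_vec n" by (rule Pr_c[OF j' v])
        have "vsum (a j0) J (\<lambda>j. transpose_mat (X j0) *\<^sub>v (Pr j *\<^sub>v v)) =
            transpose_mat (X j0) *\<^sub>v (Pr j0 *\<^sub>v v) + vsum (a j0) (J - {j0}) (\<lambda>j. transpose_mat (X j0) *\<^sub>v (Pr j *\<^sub>v v))"
          by (rule vsum_remove[OF fJ 3]) (use Xc[OF j'] Prv in simp)
        also have "vsum (a j0) (J - {j0}) (\<lambda>j. transpose_mat (X j0) *\<^sub>v (Pr j *\<^sub>v v)) = 0\<^sub>v (a j0)"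
          by (rule vsum_zero) (use H3[OF j1 _ _ v] J in \<open>auto simp: subset_iff\<close>)
        finally have vs: "vsum (a j0) J (\<lambda>j. transpose_mat (X j0) *\<^sub>v (Pr j *\<^sub>v v)) =
            transpose_mat (X j0) *\<^sub>v (Pr j0 *\<^sub>v v) + 0\<^sub>v (a j0)" .
        have "transpose_mat (X j0) *\<^sub>v (v - Pm *\<^sub>v v - Pr j0 *\<^sub>v v) =
            transpose_mat (X j0) *\<^sub>v (v - Pm *\<^sub>v v) - transpose_mat (X j0) *\<^sub>v (Pr j0 *\<^sub>v v)"
          by (rule mult_minus_distrib_mat_vec[of _ "a j0" n]) (use Xc[OF j'] v Pv Prv in auto)
        hence "transpose_mat (X j0) *\<^sub>v (v - Pm *\<^sub>v v) - transpose_mat (X j0) *\<^sub>v (Pr j0 *\<^sub>v v) = 0\<^sub>v (a j0)"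
          using H4[OF j' v] by simp
        moreover have "transpose_mat (X j0) *\<^sub>v (v - PJ J *\<^sub>v v) =
            transpose_mat (X j0) *\<^sub>v (v - Pm *\<^sub>v v) - transpose_mat (X j0) *\<^sub>v (Pr j0 *\<^sub>v v)"
          unfolding XT_vP[OF j' Jm v] vs by (rule eq_vecI) (use Xc[OF j'] Prv v Pv in auto)
        ultimately show ?thesis using nc[OF j'] by simp
      qed
    qed
  qed
qed


lemma ProjPJ:
  assumes J: "J \<subseteq> {1..m-1}"
  shows "Proj n m a lev (J \<union> {m, Suc m}) = PJ J"
  by (rule Proj_eq[OF PJ_proj[OF J]])

lemma KEY:
  assumes i: "i \<in> {1..m-1}" and y: "y \<in> carrier_vec n"
  shows "transpose_mat (X i) *\<^sub>v ((1\<^sub>m n - PJ ({1..m-1} - {i})) *\<^sub>v y) =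
     transpose_mat (X i) *\<^sub>v y - (Nmat n m a lev i m * Rm) *\<^sub>v (transpose_mat (X m) *\<^sub>v y)"
proof -
  define J where "J = {1..m-1} - {i}"
  have i': "i \<in> {1..m}" using i by auto
  have Jm: "J \<subseteq> {1..m}" unfolding J_def by auto
  have XiT: "transpose_mat (X i) \<in> carrier_mat (a i) n" using Xc[OF i'] by simp
  have Pv: "Pm *\<^sub>v y \<in> carrier_vec n" using Pmc y by simp
  have vz: "vsum (a i) J (\<lambda>j. transpose_mat (X i) *\<^sub>v (Pr j *\<^sub>v y)) = 0\<^sub>v (a i)"
    by (rule vsum_zero) (use H3[OF i _ _ y] in \<open>auto simp: J_def\<close>)
  have 1: "transpose_mat (X i) *\<^sub>v (y - PJ J *\<^sub>v y) = transpose_mat (X i) *\<^sub>v (y - Pm *\<^sub>v y)"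
    unfolding XT_vP[OF i' Jm y] vz by (rule eq_vecI) (use XiT y Pv in auto)
  have 2: "transpose_mat (X i) *\<^sub>v (y - Pm *\<^sub>v y) = transpose_mat (X i) *\<^sub>v y - transpose_mat (X i) *\<^sub>v (Pm *\<^sub>v y)"
    by (rule mult_minus_distrib_mat_vec[OF XiT y Pv])
  define w where "w = transpose_mat (X m) *\<^sub>v y"
  have wc: "w \<in> carrier_vec (a m)" unfolding w_def by (intro carrier_vecI) (use nc[OF mm] in simp)
  have wc': "Rm *\<^sub>v w \<in> carrier_vec (ncols m a m)" using Rmc wc nc[OF mm] by simp
  have "transpose_mat (X i) *\<^sub>v (Pm *\<^sub>v y) = transpose_mat (X i) *\<^sub>v (X m *\<^sub>v (Rm *\<^sub>v w))"
    unfolding Pm_apply[OF y] w_def ..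
  also have "\<dots> = Nmat n m a lev i m *\<^sub>v (Rm *\<^sub>v w)" using N_apply[OF wc'] by simp
  also have "\<dots> = (Nmat n m a lev i m * Rm) *\<^sub>v w"
    by (rule assoc_mult_mat_vec[symmetric, of _ "a i" "a m"]) (use Xc[OF i'] Xmc Rmc wc in \<open>auto simp: Nmat_def\<close>)
  finally have 3: "transpose_mat (X i) *\<^sub>v (Pm *\<^sub>v y) = (Nmat n m a lev i m * Rm) *\<^sub>v w" .
  have "(1\<^sub>m n - PJ J) *\<^sub>v y = y - PJ J *\<^sub>v y" by (rule IP_apply[OF PJc y])
  thus ?thesis using 1 2 3 unfolding J_def w_def by simp
qed

lemma partA:
  assumes i: "i \<in> {1..m-1}" and Y: "Y \<in> carrier_vec n"
  shows "Cmat n m a lev i ({1..Suc m} - {i}) =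
      Rmat n m a lev i - Nmat n m a lev i m * Rm * transpose_mat (Nmat n m a lev i m)"
    and "Qvec n m a lev Y i ({1..Suc m} - {i}) =
      Tvec n m a lev Y i - Nmat n m a lev i m * Rm *\<^sub>v Tvec n m a lev Y m"
proof -
  define J where "J = {1..m-1} - {i}"
  have i': "i \<in> {1..m}" using i by auto
  have J: "J \<subseteq> {1..m-1}" unfolding J_def by auto
  have Teq: "{1..Suc m} - {i} = J \<union> {m, Suc m}" unfolding J_def using i m2 by auto
  have PT: "Proj n m a lev ({1..Suc m} - {i}) = PJ J" unfolding Teq by (rule ProjPJ[OF J])
  show "Qvec n m a lev Y i ({1..Suc m} - {i}) =
      Tvec n m a lev Y i - Nmat n m a lev i m * Rm *\<^sub>v Tvec n m a lev Y m"
    unfolding Qvec_def PT J_def KEY[OF i Y] Tvec_def ..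
  have Xi: "X i \<in> carrier_mat n (a i)" by (rule Xc[OF i'])
  have Nim: "Nmat n m a lev i m \<in> carrier_mat (a i) (a m)" unfolding Nmat_def using Xi Xmc by simp
  have Nmi: "Nmat n m a lev m i \<in> carrier_mat (a m) (a i)" unfolding Nmat_def using Xi Xmc by simp
  have NT: "transpose_mat (Nmat n m a lev i m) = Nmat n m a lev m i"
    unfolding Nmat_def by (subst transpose_mult[of _ "a i" n]) (use Xi Xmc in auto)
  show "Cmat n m a lev i ({1..Suc m} - {i}) =
      Rmat n m a lev i - Nmat n m a lev i m * Rm * transpose_mat (Nmat n m a lev i m)"
  proof (rule mat_eq_mult[of _ "a i" "a i"])
    show "Cmat n m a lev i ({1..Suc m} - {i}) \<in> carrier_mat (a i) (a i)"
      unfolding Cmat_def PT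
      by (intro mult_carrier_mat[of _ _ n] minus_carrier_mat[OF PJc[of J]]) (use Xi in auto)
    show "Rmat n m a lev i - Nmat n m a lev i m * Rm * transpose_mat (Nmat n m a lev i m) \<in> carrier_mat (a i) (a i)"
      by (rule minus_carrier_mat) (use Nim Rmc in simp)
    fix c :: "real vec" assume c: "c \<in> carrier_vec (a i)"
    have xc: "X i *\<^sub>v c \<in> carrier_vec n" using Xi c by simp
    have cc: "c \<in> carrier_vec (ncols m a i)" using c nc[OF i'] by simp
    have "Cmat n m a lev i ({1..Suc m} - {i}) *\<^sub>v c = (transpose_mat (X i) * (1\<^sub>m n - PJ J)) *\<^sub>v (X i *\<^sub>v c)"
      unfolding Cmat_def PT by (rule assoc_mult_mat_vec[of _ "a i" n]) (use Xi PJc[of J] minus_carrier_mat[OF PJc[of J], of "1\<^sub>m n"] c in auto)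
    also have "\<dots> = transpose_mat (X i) *\<^sub>v ((1\<^sub>m n - PJ J) *\<^sub>v (X i *\<^sub>v c))"
      by (rule assoc_mult_mat_vec[of _ "a i" n]) (use Xi PJc[of J] minus_carrier_mat[OF PJc[of J], of "1\<^sub>m n"] xc in auto)
    also have "\<dots> = transpose_mat (X i) *\<^sub>v (X i *\<^sub>v c) - (Nmat n m a lev i m * Rm) *\<^sub>v (transpose_mat (X m) *\<^sub>v (X i *\<^sub>v c))"
      unfolding J_def by (rule KEY[OF i xc])
    also have "transpose_mat (X i) *\<^sub>v (X i *\<^sub>v c) = Rmat n m a lev i *\<^sub>v c"
      using N_apply[OF cc, of i] Nii[OF i'] by simp
    also have "transpose_mat (X m) *\<^sub>v (X i *\<^sub>v c) = Nmat n m a lev m i *\<^sub>v c"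
      using N_apply[OF cc, of m] by simp
    also have "(Nmat n m a lev i m * Rm) *\<^sub>v (Nmat n m a lev m i *\<^sub>v c) = (Nmat n m a lev i m * Rm * Nmat n m a lev m i) *\<^sub>v c"
      by (rule assoc_mult_mat_vec[symmetric, of _ "a i" "a m"]) (use Nim Rmc Nmi c in auto)
    also have "Rmat n m a lev i *\<^sub>v c - (Nmat n m a lev i m * Rm * Nmat n m a lev m i) *\<^sub>v c =
        (Rmat n m a lev i - Nmat n m a lev i m * Rm * transpose_mat (Nmat n m a lev i m)) *\<^sub>v c"
      unfolding NT by (rule minus_mult_distrib_mat_vec[symmetric, of _ "a i" "a i"]) (use nc[OF i'] Nim Rmc Nmi c in \<open>auto simp: Rmat_def\<close>)
    finally show "Cmat n m a lev i ({1..Suc m} - {i}) *\<^sub>v c =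
        (Rmat n m a lev i - Nmat n m a lev i m * Rm * transpose_mat (Nmat n m a lev i m)) *\<^sub>v c" .
  qed
qed


lemma PJ_empty: "PJ {} = Pm"
  by (rule eq_matI) (use Pmc in \<open>auto simp: PJ_def\<close>)

lemma Pm_proj: "isproj n Pm (colspace n m a lev {m, Suc m})"
  using PJ_proj[of "{}"] unfolding PJ_empty by simp

lemma Proj_m: "Proj n m a lev {m, Suc m} = Pm"
  by (rule Proj_eq[OF Pm_proj])

lemma SSj:
  assumes j: "j \<in> {1..m-1}" and Y: "Y \<in> carrier_vec n"
  shows "SSfac n m a lev Y j {m, Suc m} = Y \<bullet> (Pr j *\<^sub>v Y)"
proof -
  have j': "j \<in> {1..m}" using j by auto
  have "SSfac n m a lev Y j {m, Suc m} =
     (transpose_mat (X j) *\<^sub>v ((1\<^sub>m n - Pm) *\<^sub>v Y)) \<bullet>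
     (ginv (ncols m a j) (transpose_mat (X j) * (1\<^sub>m n - Pm) * X j) *\<^sub>v (transpose_mat (X j) *\<^sub>v ((1\<^sub>m n - Pm) *\<^sub>v Y)))"
    unfolding SSfac_def Let_def Qvec_def Cmat_def Proj_m ..
  also have "\<dots> = Y \<bullet> (Pr j *\<^sub>v Y)"
    by (rule ss_lemma[OF minus_carrier_mat[OF Pmc] Xd_carrier Y IP_sym[OF Pm_proj colspace_subsp]
          IP_idem[OF Pm_proj colspace_subsp] PrP[OF j']])
  finally show ?thesis .
qed

lemma SSE_expand:
  assumes Y: "Y \<in> carrier_vec n"
  shows "SSE n m a lev Y = Y \<bullet> Y - Y \<bullet> (Pm *\<^sub>v Y) - (\<Sum>j\<in>{1..m-1}. Y \<bullet> (Pr j *\<^sub>v Y))"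
proof -
  have Jeq: "{1..Suc m} = {1..m-1} \<union> {m, Suc m}" using m2 by auto
  have J: "{1..m-1} \<subseteq> {1..m}" by auto
  have PT: "Proj n m a lev {1..Suc m} = PJ {1..m-1}" unfolding Jeq by (rule ProjPJ) simp
  have Pv: "Pm *\<^sub>v Y \<in> carrier_vec n" using Pmc Y by simp
  have fc: "\<And>j. j \<in> {1..m-1} \<Longrightarrow> Pr j *\<^sub>v Y \<in> carrier_vec n" using Pr_c Y by auto
  have "SSE n m a lev Y = Y \<bullet> (Y - (Pm *\<^sub>v Y + vsum n {1..m-1} (\<lambda>j. Pr j *\<^sub>v Y)))"
    unfolding SSE_def PT IP_apply[OF PJc Y] PJ_apply[OF J Y] ..
  also have "\<dots> = Y \<bullet> Y - (Y \<bullet> (Pm *\<^sub>v Y) + Y \<bullet> vsum n {1..m-1} (\<lambda>j. Pr j *\<^sub>v Y))"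
  proof -
    have 1: "Y \<bullet> (Y - (Pm *\<^sub>v Y + vsum n {1..m-1} (\<lambda>j. Pr j *\<^sub>v Y))) =
       Y \<bullet> Y - Y \<bullet> (Pm *\<^sub>v Y + vsum n {1..m-1} (\<lambda>j. Pr j *\<^sub>v Y))"
      by (rule dot_minus_r[OF Y _ Y]) (use Pv in simp)
    have 2: "Y \<bullet> (Pm *\<^sub>v Y + vsum n {1..m-1} (\<lambda>j. Pr j *\<^sub>v Y)) =
       Y \<bullet> (Pm *\<^sub>v Y) + Y \<bullet> vsum n {1..m-1} (\<lambda>j. Pr j *\<^sub>v Y)"
      by (rule scalar_prod_add_distrib[OF Y Pv vsum_carrier])
    show ?thesis unfolding 1 2 ..
  qed
  also have "Y \<bullet> vsum n {1..m-1} (\<lambda>j. Pr j *\<^sub>v Y) = (\<Sum>j\<in>{1..m-1}. Y \<bullet> (Pr j *\<^sub>v Y))"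
    by (rule dot_vsum[OF Y fc])
  finally show ?thesis by simp
qed

definition sv :: "real vec \<Rightarrow> real" where "sv z = (\<Sum>u\<in>{0..<n}. z $ u)"
definition "Z = mat n n (\<lambda>_. 1 / real n)"

lemma Zc: "Z \<in> carrier_mat n n" unfolding Z_def by simp

lemma Z_apply: "z \<in> carrier_vec n \<Longrightarrow> Z *\<^sub>v z = vec n (\<lambda>_. sv z / real n)"
  by (rule eq_vecI) (auto simp: Z_def sv_def scalar_prod_def sum_divide_distrib)

lemma dotc: "w \<in> carrier_vec n \<Longrightarrow> w \<bullet> vec n (\<lambda>_. \<alpha>) = \<alpha> * sv w"
  by (auto simp: sv_def scalar_prod_def sum_distrib_left mult.commute intro!: sum.cong)

lemma sv_minus: assumes "x \<in> carrier_vec n" "y \<in> carrier_vec n" shows "sv (x - y) = sv x - sv y"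
proof -
  have "sv (x - y) = (\<Sum>u\<in>{0..<n}. x $ u - y $ u)" unfolding sv_def by (rule sum.cong) (use assms in auto)
  also have "\<dots> = (\<Sum>u\<in>{0..<n}. x $ u) - (\<Sum>u\<in>{0..<n}. y $ u)" by (rule sum_subtractf)
  finally show ?thesis unfolding sv_def .
qed

lemma sv_add: assumes "x \<in> carrier_vec n" "y \<in> carrier_vec n" shows "sv (x + y) = sv x + sv y"
proof -
  have "sv (x + y) = (\<Sum>u\<in>{0..<n}. x $ u + y $ u)" unfolding sv_def by (rule sum.cong) (use assms in auto)
  also have "\<dots> = (\<Sum>u\<in>{0..<n}. x $ u) + (\<Sum>u\<in>{0..<n}. y $ u)" by (rule sum.distrib)
  finally show ?thesis unfolding sv_def .
qed

lemma sv_const: "sv (vec n (\<lambda>_. \<alpha>)) = real n * \<alpha>"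
  by (simp add: sv_def)

lemma sumX:
  assumes z: "z \<in> carrier_vec n"
  shows "sv z = (\<Sum>t\<in>{0..<a m}. (transpose_mat (X m) *\<^sub>v z) $ t)"
proof -
  have mS: "m \<noteq> Suc m" by simp
  have "sv z = (\<Sum>u\<in>{0..<n}. \<Sum>t\<in>{0..<a m}. if lev m u = t then z $ u else 0)"
    unfolding sv_def by (rule sum.cong) (use lev_range[OF mm] in \<open>auto simp: sum.delta'\<close>)
  also have "\<dots> = (\<Sum>t\<in>{0..<a m}. \<Sum>u\<in>{0..<n}. if lev m u = t then z $ u else 0)" by (rule sum.swap)
  also have "\<dots> = (\<Sum>t\<in>{0..<a m}. (transpose_mat (X m) *\<^sub>v z) $ t)"
    by (rule sum.cong) (use XT_apply[OF mS z] in auto)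
  finally show ?thesis .
qed

lemma sv_Pm: "v \<in> carrier_vec n \<Longrightarrow> sv (Pm *\<^sub>v v) = sv v"
  using sumX[of "Pm *\<^sub>v v"] sumX[of v] H1[of v] Pmc by simp

lemma Z_proj:
  assumes n: "n > 0"
  shows "isproj n Z (colspace n m a lev {Suc m})"
proof (rule colspace_proj)
  show "finite {Suc m}" by simp
  show "Z \<in> carrier_mat n n" by (rule Zc)
next
  fix v :: "real vec" assume v: "v \<in> carrier_vec n"
  define c where "c = (\<lambda>_::nat. vec 1 (\<lambda>_. sv v / real n))"
  have "Z *\<^sub>v v = vec n (\<lambda>u. \<Sum>j\<in>{Suc m}. (X j *\<^sub>v c j) $ u)"
    unfolding Z_apply[OF v] c_def by (rule eq_vecI) (auto simp: Xd_def scalar_prod_def)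
  moreover have "\<forall>j\<in>{Suc m}. c j \<in> carrier_vec (ncols m a j)" unfolding c_def ncols_def by simp
  ultimately show "\<exists>c. (\<forall>j\<in>{Suc m}. c j \<in> carrier_vec (ncols m a j)) \<and>
       Z *\<^sub>v v = vec n (\<lambda>u. \<Sum>j\<in>{Suc m}. (X j *\<^sub>v c j) $ u)" by blast
next
  fix v :: "real vec" and j assume v: "v \<in> carrier_vec n" and j: "j \<in> {Suc m}"
  have Zv: "Z *\<^sub>v v \<in> carrier_vec n" using Zc v by simp
  have "sv (Z *\<^sub>v v) = sv v" unfolding Z_apply[OF v] sv_const using n by simp
  hence "sv (v - Z *\<^sub>v v) = 0" using sv_minus[OF v Zv] by simp
  moreover have "transpose_mat (X (Suc m)) *\<^sub>v (v - Z *\<^sub>v v) = vec 1 (\<lambda>_. sv (v - Z *\<^sub>v v))"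
    unfolding sv_def by (rule XsT_apply) (use v Zv in simp)
  ultimately have "transpose_mat (X (Suc m)) *\<^sub>v (v - Z *\<^sub>v v) = 0\<^sub>v 1" by auto
  thus "transpose_mat (X j) *\<^sub>v (v - Z *\<^sub>v v) = 0\<^sub>v (ncols m a j)" using j by (simp add: ncols_def)
qed


lemma Z_of: "v \<in> carrier_vec n \<Longrightarrow> Z *\<^sub>v (Pm *\<^sub>v v) = Z *\<^sub>v v"
  using Z_apply[of v] Z_apply[of "Pm *\<^sub>v v"] sv_Pm[of v] Pmc by simp

lemma PmZ_proj:
  assumes n: "n > 0"
  shows "isproj n (Pm - Z) (cs ((1\<^sub>m n - Z) * X m))"
proof -
  have IZX: "(1\<^sub>m n - Z) * X m \<in> carrier_mat n (a m)" by (rule mult_carrier_mat[OF minus_carrier_mat[OF Zc] Xmc])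
  have wf: "((1\<^sub>m n - Z) * X m) *\<^sub>v c = X m *\<^sub>v c - Z *\<^sub>v (X m *\<^sub>v c)" if c: "c \<in> carrier_vec (a m)" for c
  proof -
    have "((1\<^sub>m n - Z) * X m) *\<^sub>v c = (1\<^sub>m n - Z) *\<^sub>v (X m *\<^sub>v c)"
      by (rule assoc_mult_mat_vec[of _ n n]) (use minus_carrier_mat[OF Zc] Xmc c in auto)
    also have "\<dots> = X m *\<^sub>v c - Z *\<^sub>v (X m *\<^sub>v c)" by (rule IP_apply[OF Zc]) (use Xmc c in simp)
    finally show ?thesis .
  qed
  show ?thesis unfolding isproj_def
  proof (intro conjI ballI)
    show "Pm - Z \<in> carrier_mat n n" by (rule minus_carrier_mat[OF Zc])
  next
    fix v :: "real vec" assume v: "v \<in> carrier_vec n"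
    define b where "b = Rm *\<^sub>v (transpose_mat (X m) *\<^sub>v v)"
    have bc: "b \<in> carrier_vec (a m)" unfolding b_def using Rmc Xmc v by simp
    have Xb: "X m *\<^sub>v b = Pm *\<^sub>v v" unfolding b_def Pm_apply[OF v] ..
    have "((1\<^sub>m n - Z) * X m) *\<^sub>v b = Pm *\<^sub>v v - Z *\<^sub>v (Pm *\<^sub>v v)"
      unfolding wf[OF bc] Xb ..
    also have "\<dots> = (Pm - Z) *\<^sub>v v" unfolding Z_of[OF v]
      by (rule minus_mult_distrib_mat_vec[symmetric, OF Pmc Zc v])
    finally show "(Pm - Z) *\<^sub>v v \<in> cs ((1\<^sub>m n - Z) * X m)"
      unfolding cs_def using bc IZX by (intro CollectI exI[of _ b]) auto
  next
    fix v w :: "real vec" assume v: "v \<in> carrier_vec n" and w: "w \<in> cs ((1\<^sub>m n - Z) * X m)"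
    obtain c where c: "c \<in> carrier_vec (a m)" and we: "w = ((1\<^sub>m n - Z) * X m) *\<^sub>v c"
      using w IZX unfolding cs_def by auto
    define x where "x = X m *\<^sub>v c"
    have xc: "x \<in> carrier_vec n" unfolding x_def using Xmc c by simp
    have Pv: "Pm *\<^sub>v v \<in> carrier_vec n" using Pmc v by simp
    have Zv: "Z *\<^sub>v v \<in> carrier_vec n" using Zc v by simp
    have Zx: "Z *\<^sub>v x \<in> carrier_vec n" using Zc xc by simp
    define r where "r = v - (Pm - Z) *\<^sub>v v"
    have r: "r = (v - Pm *\<^sub>v v) + Z *\<^sub>v v"
      unfolding r_def minus_mult_distrib_mat_vec[OF Pmc Zc v] by (rule eq_vecI) (use v Pv Zv Pmc Zc in auto)
    have rc: "r \<in> carrier_vec n" unfolding r using v Pv Zv by simp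
    have vPc: "v - Pm *\<^sub>v v \<in> carrier_vec n" using v Pv by simp
    have "(v - Pm *\<^sub>v v) \<bullet> x = (transpose_mat (X m) *\<^sub>v (v - Pm *\<^sub>v v)) \<bullet> c"
      unfolding x_def by (rule adj[OF Xmc c vPc])
    also have "\<dots> = 0" unfolding H1'[OF v] using c by simp
    finally have d1: "(v - Pm *\<^sub>v v) \<bullet> x = 0" .
    have d2: "(Z *\<^sub>v v) \<bullet> x = sv v / real n * sv x"
      using dot_comm[OF Zv xc] dotc[OF xc, of "sv v / real n"] Z_apply[OF v] by simp
    have d3: "r \<bullet> (Z *\<^sub>v x) = sv x / real n * sv r" using dotc[OF rc] Z_apply[OF xc] by simp
    have svr: "sv r = sv v"
    proof -
      have "sv r = sv (v - Pm *\<^sub>v v) + sv (Z *\<^sub>v v)" unfolding r by (rule sv_add[OF vPc Zv])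
      also have "sv (v - Pm *\<^sub>v v) = 0" using sv_minus[OF v Pv] sv_Pm[OF v] by simp
      also have "sv (Z *\<^sub>v v) = sv v" unfolding Z_apply[OF v] sv_const using n by simp
      finally show ?thesis by simp
    qed
    have "r \<bullet> w = r \<bullet> (x - Z *\<^sub>v x)" unfolding we wf[OF c] x_def ..
    also have "\<dots> = r \<bullet> x - r \<bullet> (Z *\<^sub>v x)" by (rule dot_minus_r[OF xc Zx rc])
    also have "r \<bullet> x = (v - Pm *\<^sub>v v) \<bullet> x + (Z *\<^sub>v v) \<bullet> x" unfolding r by (rule add_scalar_prod_distrib[OF vPc Zv xc])
    finally show "(v - (Pm - Z) *\<^sub>v v) \<bullet> w = 0" unfolding r_def[symmetric] using d1 d2 d3 svr by simp
  qed
qed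

lemma SSm:
  assumes n: "n > 0" and Y: "Y \<in> carrier_vec n"
  shows "SSfac n m a lev Y m {Suc m} = Y \<bullet> (Pm *\<^sub>v Y) - Y \<bullet> (Z *\<^sub>v Y)"
proof -
  have PS: "Proj n m a lev {Suc m} = Z" by (rule Proj_eq[OF Z_proj[OF n]])
  have "SSfac n m a lev Y m {Suc m} =
     (transpose_mat (X m) *\<^sub>v ((1\<^sub>m n - Z) *\<^sub>v Y)) \<bullet>
     (ginv (ncols m a m) (transpose_mat (X m) * (1\<^sub>m n - Z) * X m) *\<^sub>v (transpose_mat (X m) *\<^sub>v ((1\<^sub>m n - Z) *\<^sub>v Y)))"
    unfolding SSfac_def Let_def Qvec_def Cmat_def PS ..
  also have "\<dots> = Y \<bullet> ((Pm - Z) *\<^sub>v Y)"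
    by (rule ss_lemma[OF minus_carrier_mat[OF Zc] Xd_carrier Y IP_sym[OF Z_proj[OF n] colspace_subsp]
          IP_idem[OF Z_proj[OF n] colspace_subsp] PmZ_proj[OF n]])
  also have "\<dots> = Y \<bullet> (Pm *\<^sub>v Y) - Y \<bullet> (Z *\<^sub>v Y)"
    unfolding minus_mult_distrib_mat_vec[OF Pmc Zc Y] by (rule dot_minus_r[OF _ _ Y]) (use Pmc Zc Y in auto)
  finally show ?thesis .
qed

lemma SStot_eq:
  assumes n: "n > 0" and Y: "Y \<in> carrier_vec n"
  shows "SStot n Y = Y \<bullet> Y - Y \<bullet> (Z *\<^sub>v Y)"
proof -
  have 1: "Y \<bullet> Y = (\<Sum>u<n. (Y $ u)^2)" using Y by (simp add: scalar_prod_def power2_eq_square atLeast0LessThan)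
  have "Y \<bullet> (Z *\<^sub>v Y) = sv Y / real n * sv Y" unfolding Z_apply[OF Y] by (rule dotc[OF Y])
  also have "\<dots> = (\<Sum>u<n. Y $ u)^2 / real n" by (simp add: sv_def atLeast0LessThan power2_eq_square)
  finally show ?thesis unfolding SStot_def 1 by simp
qed

lemma Cmat_carrier: "Cmat n m a lev i T \<in> carrier_mat (ncols m a i) (ncols m a i)"
  unfolding Cmat_def by (intro carrier_matI) simp_all

lemma SSfac_zero:
  assumes "ncols m a i = 0"
  shows "SSfac n m a lev Y i T = 0"
proof -
  have "ginv (ncols m a i) (Cmat n m a lev i T) \<in> carrier_mat (ncols m a i) (ncols m a i)"
    by (rule ginv_prop(1)[OF Cmat_carrier])
  thus ?thesis using assms unfolding SSfac_def Let_def by (simp add: scalar_prod_def)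
qed

lemma partB:
  assumes Y: "Y \<in> carrier_vec n"
  shows "SSE n m a lev Y =
    SStot n Y - (\<Sum>j\<in>{1..m-1}. SSfac n m a lev Y j {m, Suc m}) - SSfac n m a lev Y m {Suc m}"
proof (cases "n = 0")
  case True
  have a0: "a i = 0" if i: "i \<in> {1..m}" for i
  proof (rule ccontr)
    assume "a i \<noteq> 0"
    then obtain u where "u < n" using all_levels[OF i, of 0] by auto
    thus False using True by simp
  qed
  have Jeq: "{1..Suc m} = {1..m-1} \<union> {m, Suc m}" using m2 by auto
  have PT: "Proj n m a lev {1..Suc m} = PJ {1..m-1}" unfolding Jeq by (rule ProjPJ) simp
  have "SSE n m a lev Y = 0" unfolding SSE_def PT using PJc[of "{1..m-1}"] True
    by (simp add: scalar_prod_def)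
  moreover have "SStot n Y = 0" using True by (simp add: SStot_def)
  moreover have "(\<Sum>j\<in>{1..m-1}. SSfac n m a lev Y j {m, Suc m}) = 0"
    by (rule sum.neutral) (use a0 in \<open>auto intro!: SSfac_zero simp: ncols_def\<close>)
  moreover have "SSfac n m a lev Y m {Suc m} = 0"
    by (rule SSfac_zero) (use a0[OF mm] nc[OF mm] in simp)
  ultimately show ?thesis by simp
next
  case False
  hence n: "n > 0" by simp
  have "(\<Sum>j\<in>{1..m-1}. SSfac n m a lev Y j {m, Suc m}) = (\<Sum>j\<in>{1..m-1}. Y \<bullet> (Pr j *\<^sub>v Y))"
    by (rule sum.cong) (use SSj Y in auto)
  thus ?thesis unfolding SSE_expand[OF Y] SStot_eq[OF n Y] SSm[OF n Y] by simp
qed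

end

theorem main:
  fixes n m :: nat and a :: "nat \<Rightarrow> nat" and lev :: "nat \<Rightarrow> nat \<Rightarrow> nat" and Y :: "real vec"
  assumes m2: "m \<ge> 2"
    and lev_range: "\<And>i u. i \<in> {1..m} \<Longrightarrow> u < n \<Longrightarrow> lev i u < a i"
    and all_levels: "\<And>i t. i \<in> {1..m} \<Longrightarrow> t < a i \<Longrightarrow> \<exists>u<n. lev i u = t"
    and Y: "Y \<in> carrier_vec n"
    and orth: "\<And>i j. i \<in> {1..m-1} \<Longrightarrow> j \<in> {1..m-1} \<Longrightarrow> i \<noteq> j \<Longrightarrow>
       Nmat n m a lev i j = Nmat n m a lev i m * Rinv n m a lev m * Nmat n m a lev m j"
  shows "(\<forall>i\<in>{1..m-1}.
            Cmat n m a lev i ({1..Suc m} - {i}) =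
              Rmat n m a lev i - Nmat n m a lev i m * Rinv n m a lev m * transpose_mat (Nmat n m a lev i m)
          \<and> Qvec n m a lev Y i ({1..Suc m} - {i}) =
              Tvec n m a lev Y i - Nmat n m a lev i m * Rinv n m a lev m *\<^sub>v Tvec n m a lev Y m)
       \<and> SSE n m a lev Y =
           SStot n Y - (\<Sum>j\<in>{1..m-1}. SSfac n m a lev Y j {m, Suc m}) - SSfac n m a lev Y m {Suc m}"
proof -
  interpret plan n m a lev using m2 lev_range all_levels orth by unfold_locales
  show ?thesis using partA[OF _ Y] partB[OF Y] by blast
qed


theorem theorem4p5:
  fixes n m :: nat and a :: "nat \<Rightarrow> nat" and lev :: "nat \<Rightarrow> nat \<Rightarrow> nat" and Y :: "real vec"
  assumes m2: "m \<ge> 2"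
    and lev_range: "\<And>i u. i \<in> {1..m} \<Longrightarrow> u < n \<Longrightarrow> lev i u < a i"
    and all_levels: "\<And>i t. i \<in> {1..m} \<Longrightarrow> t < a i \<Longrightarrow> \<exists>u<n. lev i u = t"
    and Y: "Y \<in> carrier_vec n"
    and orth: "\<And>i j. i \<in> {1..m-1} \<Longrightarrow> j \<in> {1..m-1} \<Longrightarrow> i \<noteq> j \<Longrightarrow>
       Nmat n m a lev i j = Nmat n m a lev i m * Rinv n m a lev m * Nmat n m a lev m j"
  shows "(\<forall>i\<in>{1..m-1}.
            Cmat n m a lev i ({1..Suc m} - {i}) =
              Rmat n m a lev i - Nmat n m a lev i m * Rinv n m a lev m * transpose_mat (Nmat n m a lev i m)
          \<and> Qvec n m a lev Y i ({1..Suc m} - {i}) =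
              Tvec n m a lev Y i - Nmat n m a lev i m * Rinv n m a lev m *\<^sub>v Tvec n m a lev Y m)
       \<and> SSE n m a lev Y =
           SStot n Y - (\<Sum>j\<in>{1..m-1}. SSfac n m a lev Y j {m, Suc m}) - SSfac n m a lev Y m {Suc m}"
  using main[OF assms] .

end
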